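(* Let $\mathcal C$ be a $\Delta$-complex labeled over $B(X,P)$, let $H$ be a closed inverse submonoid of $M(X,P)$ and let $\Gamma_H$ be its $\omega$-coset graph. Let $k\ge2$ and let $\mathcal E$ be a $\Delta$-complex labeled over $B(X,P)$ together with an immersion $f^S\colon\mathcal E\to\mathcal C$ commuting with the labelings, such that the labeled graph $\Gamma_{\mathcal E}$ is identified (label-preservingly) with a subgraph $S$ of $\Gamma_H$ having the same vertex set as $\Gamma_H$ and containing all edges of $\Gamma_H$ labeled by letters of $X\cup X^{-1}\cup P_2\cup\dots\cup P_{k-1}$. Let $v$ be a vertex of $\Gamma_H$ at which $\Gamma_H$ has a loop labeled $\rho\in P_k$ that is not in $S$, and suppose $C^k$ is a $k$-cell of $\mathcal C$ labeled $\rho$ with root $f^S(v)$; let $\varphi_k=\sigma_{C^k}|_{\partial\Delta^k}$ be its attaching map. Then there exists a unique map $\tilde\varphi_k\colon\partial\Delta^k\to\mathcal E$ such that $\tilde\varphi_k(v_0)=v$, the restriction of $\tilde\varphi_k$ to each $(k-1)$-dimensional face of $\Delta^k$ is the distinguished characteristic map of some $(k-1)$-cell of $\mathcal E$, and $f^S\circ\tilde\varphi_k=\varphi_k$. Moreover $\tilde\varphi_k$ is continuous, so it is the attaching map of a new $k$-cell rooted at $v$ making $\mathcal E\cup_{\tilde\varphi_k}\Delta^k$ a $\Delta$-complex.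
   Context: A $\Delta$-complex is a CW-complex in which each $k$-cell $c$ has a distinguished characteristic map $\sigma_c\colon\Delta^k\to\mathcal C$, $\Delta^k=[v_0,\dots,v_k]$ the standard simplex with ordered vertices, such that the restriction of $\sigma_c$ to each $(k-1)$-face (identified order-preservingly with $\Delta^{k-1}$) is the distinguished characteristic map of a $(k-1)$-cell. The root of $c$ is $\alpha(c)=\sigma_c(v_0)$; a $1$-cell $e$ is directed from $\sigma_e(v_0)$ to $\sigma_e(v_1)$. Complexes are connected and finite-dimensional. An immersion is a continuous map that is a local homeomorphism onto its image and commutes with characteristic maps (each $k$-cell $d$ maps onto a $k$-cell with $f\circ\sigma_d=\sigma_{f(d)}$). $B(X,P)$ is a $\Delta$-complex with one $0$-cell, $1$-cells indexed by $X$, $k$-cells ($2\le k\le n$) indexed by $P_k$, index sets pairwise disjoint, $P=\bigcup P_k$. A complex $\mathcal C$ is labeled over $B(X,P)$ via an immersion $f_{\mathcal C}\colon\mathcal C\to B(X,P)$, and $\ell(c)$ is the index of $f_{\mathcal C}(c)$; an immersion $g\colon\mathcal D\to\mathcal C$ commutes with labelings if $f_{\mathcal C}\circ g=f_{\mathcal D}$. Boundary labels: for a $k$-cell $c$ ($k\ge2$) with characteristic map $\sigma$, let $c_i$ be the $(k-1)$-cell whose characteristic map is $\sigma$ restricted to the face omitting $v_i$, and $e(c)=\sigma([v_0,v_1])$; $bl(c)=\ell(\sigma[v_0,v_1])\ell(\sigma[v_1,v_2])\ell(\sigma[v_0,v_2])^{-1}$ if $k=2$, and $bl(c)=\ell(c_k)\cdots\ell(c_1)\ell(e(c))\ell(c_0)\ell(e(c))^{-1}$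 if $k\ge3$; $bl(\rho)$ is the boundary label of the cell of $B(X,P)$ labeled $\rho$. $M(X,P)$ is the inverse monoid presented by generators $X\cup P$ and relations $\rho^2=\rho$, $\rho=\rho\,bl(\rho)$ for $\rho\in P$. For $N\subseteq M(X,P)$, $N^\omega=\{m: m\ge n \text{ for some } n\in N\}$ (natural partial order $a\le b$ iff $a=eb$, $e$ idempotent); $N$ is closed if $N=N^\omega$. For a closed inverse submonoid $H$, a right $\omega$-coset is a set $(Hm)^\omega$ with $mm^{-1}\in H$; the $\omega$-coset graph $\Gamma_H$ has the right $\omega$-cosets as vertices and an edge labeled $a\in X\cup X^{-1}\cup P$ from $(Hm)^\omega$ to $(Hma)^\omega$ whenever the latter is a right $\omega$-coset. For a labeled complex $\mathcal E$, the graph $\Gamma_{\mathcal E}$ has vertex set the $0$-cells, for each $1$-cell $e$ an edge from $\alpha(e)$ to $\omega(e)$ labeled $\ell(e)$ together with an inverse edge labeled $\ell(e)^{-1}$, and for each cell $c$ of dimension $\ge2$ a loop at $\alpha(c)$ labeled $\ell(c)$. *)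

theory Defs
  imports Main
begin

section \<open>Delta-complexes, combinatorially (semi-simplicial sets)\<close>

text \<open>A cell c of dimension k has faces face K c i (0 <= i <= k): the cell whose
 characteristic map is sigma_c restricted to the face omitting v_i.\<close>

record 'c dcx =
  cells :: "'c set"
  cdim  :: "'c \<Rightarrow> nat"
  face  :: "'c \<Rightarrow> nat \<Rightarrow> 'c"

definition verts :: "'c dcx \<Rightarrow> 'c set" where
  "verts K = {c \<in> cells K. cdim K c = 0}"

text \<open>root: sigma_c(v_0), obtained by repeatedly omitting the top vertex.\<close>
fun rootf :: "'c dcx \<Rightarrow> nat \<Rightarrow> 'c \<Rightarrow> 'c" where
  "rootf K 0 c = c"
| "rootf K (Suc n) c = rootf K n (face K c (Suc n))"

definition root :: "'c dcx \<Rightarrow> 'c \<Rightarrow> 'c" where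
  "root K c = rootf K (cdim K c) c"

text \<open>vertex sigma_c(v_i)\<close>
fun vtxf :: "'c dcx \<Rightarrow> nat \<Rightarrow> 'c \<Rightarrow> nat \<Rightarrow> 'c" where
  "vtxf K 0 c i = c"
| "vtxf K (Suc n) c i =
     (if i \<le> n then vtxf K n (face K c (Suc n)) i else vtxf K n (face K c 0) n)"

definition vert :: "'c dcx \<Rightarrow> 'c \<Rightarrow> nat \<Rightarrow> 'c" where
  "vert K c i = vtxf K (cdim K c) c i"

text \<open>e(c) = sigma_c([v_0,v_1])\<close>
fun e01f :: "'c dcx \<Rightarrow> nat \<Rightarrow> 'c \<Rightarrow> 'c" where
  "e01f K 0 c = c"
| "e01f K (Suc 0) c = c"
| "e01f K (Suc (Suc n)) c = e01f K (Suc n) (face K c (Suc (Suc n)))"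

definition e01 :: "'c dcx \<Rightarrow> 'c \<Rightarrow> 'c" where
  "e01 K c = e01f K (cdim K c) c"

text \<open>1-skeleton adjacency: a 1-cell e goes from face e 1 = sigma_e(v_0) to face e 0 = sigma_e(v_1).\<close>
definition adj :: "'c dcx \<Rightarrow> ('c \<times> 'c) set" where
  "adj K = {(face K e 1, face K e 0) | e. e \<in> cells K \<and> cdim K e = 1}"

definition is_dcx :: "'c dcx \<Rightarrow> bool" where
  "is_dcx K \<longleftrightarrow>
     (\<forall>c\<in>cells K. \<forall>i\<le>cdim K c. 0 < cdim K c \<longrightarrow>
          face K c i \<in> cells K \<and> cdim K (face K c i) = cdim K c - 1)
   \<and> (\<forall>c\<in>cells K. \<forall>i j. i < j \<and> j \<le> cdim K c \<and> 2 \<le> cdim K c \<longrightarrow>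
          face K (face K c j) i = face K (face K c i) (j - 1))
   \<and> (\<exists>N. \<forall>c\<in>cells K. cdim K c \<le> N)
   \<and> verts K \<noteq> {}
   \<and> (\<forall>x\<in>verts K. \<forall>y\<in>verts K. (x, y) \<in> (adj K \<union> (adj K)\<inverse>)\<^sup>*)"

text \<open>Immersion: dimension- and face-preserving cell map, locally injective
 (two distinct cells of the same dimension sharing the vertex at the same
 position v_i have distinct images).\<close>
definition is_imm :: "'c dcx \<Rightarrow> 'd dcx \<Rightarrow> ('c \<Rightarrow> 'd) \<Rightarrow> bool" where
  "is_imm D C f \<longleftrightarrow>
     (\<forall>c\<in>cells D. f c \<in> cells C \<and> cdim C (f c) = cdim D c
        \<and> (\<forall>i\<le>cdim D c. 0 < cdim D c \<longrightarrow> f (face D c i) = face C (f c) i))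
   \<and> (\<forall>c\<in>cells D. \<forall>c'\<in>cells D. \<forall>i. c \<noteq> c' \<and> cdim D c = cdim D c' \<and> i \<le> cdim D c
        \<and> vert D c i = vert D c' i \<longrightarrow> f c \<noteq> f c')"

definition Pall :: "(nat \<Rightarrow> 'l set) \<Rightarrow> nat \<Rightarrow> 'l set" where
  "Pall P n = (\<Union>k\<in>{2..n}. P k)"

text \<open>B(X,P): one 0-cell b0, 1-cells indexed by X, k-cells indexed by P k (2<=k<=n);
 cells of B are identified with their indices.\<close>
definition is_B :: "'l dcx \<Rightarrow> 'l set \<Rightarrow> (nat \<Rightarrow> 'l set) \<Rightarrow> nat \<Rightarrow> 'l \<Rightarrow> bool" where
  "is_B B X P n b0 \<longleftrightarrow> is_dcx B
     \<and> cells B = {b0} \<union> X \<union> Pall P n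
     \<and> cdim B b0 = 0
     \<and> (\<forall>x\<in>X. cdim B x = 1)
     \<and> (\<forall>k\<in>{2..n}. \<forall>\<rho>\<in>P k. cdim B \<rho> = k)"

text \<open>A labeled complex: ell is the immersion into B; the label of c is ell c.\<close>
definition is_labeled :: "'c dcx \<Rightarrow> 'l dcx \<Rightarrow> ('c \<Rightarrow> 'l) \<Rightarrow> bool" where
  "is_labeled K B ell \<longleftrightarrow> is_dcx K \<and> is_imm K B ell"

type_synonym 'l word = "('l \<times> bool) list"   (* (a,True) = a, (a,False) = a^-1 *)

definition winv :: "'l word \<Rightarrow> 'l word" where
  "winv w = rev (map (\<lambda>(a, b). (a, \<not> b)) w)"

definition bl :: "'l dcx \<Rightarrow> 'l \<Rightarrow> 'l word" where
  "bl B \<rho> = (let k = cdim B \<rho> in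
     if k = 2 then [(face B \<rho> 2, True), (face B \<rho> 0, True), (face B \<rho> 1, False)]
     else map (\<lambda>i. (face B \<rho> i, True)) (rev [1..<k+1])
          @ [(e01 B \<rho>, True), (face B \<rho> 0, True), (e01 B \<rho>, False)])"

definition alph :: "'l set \<Rightarrow> 'l set \<Rightarrow> ('l \<times> bool) set" where
  "alph X PP = (X \<union> PP) \<times> UNIV"

text \<open>Congruence on words presenting M(X,P) as an inverse monoid:
 Wagner's relations plus rho^2 = rho and rho = rho bl(rho).\<close>
inductive mc :: "'l dcx \<Rightarrow> 'l set \<Rightarrow> 'l set \<Rightarrow> 'l word \<Rightarrow> 'l word \<Rightarrow> bool"
  for B X PP where
  mc_refl: "w \<in> lists (alph X PP) \<Longrightarrow> mc B X PP w w"
| mc_sym: "mc B X PP u v \<Longrightarrow> mc B X PP v u"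
| mc_trans: "mc B X PP u v \<Longrightarrow> mc B X PP v w \<Longrightarrow> mc B X PP u w"
| mc_ctx: "mc B X PP u v \<Longrightarrow> x \<in> lists (alph X PP) \<Longrightarrow> y \<in> lists (alph X PP)
            \<Longrightarrow> mc B X PP (x @ u @ y) (x @ v @ y)"
| mc_ax1: "w \<in> lists (alph X PP) \<Longrightarrow> mc B X PP (w @ winv w @ w) w"
| mc_ax2: "w \<in> lists (alph X PP) \<Longrightarrow> z \<in> lists (alph X PP) \<Longrightarrow>
            mc B X PP (w @ winv w @ z @ winv z) (z @ winv z @ w @ winv w)"
| mc_idem: "\<rho> \<in> PP \<Longrightarrow> mc B X PP [(\<rho>, True), (\<rho>, True)] [(\<rho>, True)]"
| mc_bl: "\<rho> \<in> PP \<Longrightarrow> mc B X PP [(\<rho>, True)] ((\<rho>, True) # bl B \<rho>)"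

text \<open>Elements of M(X,P) are congruence classes of words.\<close>
type_synonym 'l mel = "'l word set"

definition mclass :: "'l dcx \<Rightarrow> 'l set \<Rightarrow> 'l set \<Rightarrow> 'l word \<Rightarrow> 'l mel" where
  "mclass B X PP w = {v. mc B X PP w v}"

definition Mset :: "'l dcx \<Rightarrow> 'l set \<Rightarrow> 'l set \<Rightarrow> 'l mel set" where
  "Mset B X PP = mclass B X PP ` lists (alph X PP)"

definition mmul :: "'l dcx \<Rightarrow> 'l set \<Rightarrow> 'l set \<Rightarrow> 'l mel \<Rightarrow> 'l mel \<Rightarrow> 'l mel" where
  "mmul B X PP a b = {v. \<exists>x\<in>a. \<exists>y\<in>b. mc B X PP (x @ y) v}"

definition minv :: "'l dcx \<Rightarrow> 'l set \<Rightarrow> 'l set \<Rightarrow> 'l mel \<Rightarrow> 'l mel" where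
  "minv B X PP a = {v. \<exists>x\<in>a. mc B X PP (winv x) v}"

definition mleq :: "'l dcx \<Rightarrow> 'l set \<Rightarrow> 'l set \<Rightarrow> 'l mel \<Rightarrow> 'l mel \<Rightarrow> bool" where
  "mleq B X PP a b \<longleftrightarrow> (\<exists>e\<in>Mset B X PP. mmul B X PP e e = e \<and> a = mmul B X PP e b)"

definition omega :: "'l dcx \<Rightarrow> 'l set \<Rightarrow> 'l set \<Rightarrow> 'l mel set \<Rightarrow> 'l mel set" where
  "omega B X PP N = {m \<in> Mset B X PP. \<exists>n\<in>N. mleq B X PP n m}"

definition closed_inv_submonoid :: "'l dcx \<Rightarrow> 'l set \<Rightarrow> 'l set \<Rightarrow> 'l mel set \<Rightarrow> bool" where
  "closed_inv_submonoid B X PP H \<longleftrightarrow>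
     H \<subseteq> Mset B X PP \<and> mclass B X PP [] \<in> H
   \<and> (\<forall>a\<in>H. \<forall>b\<in>H. mmul B X PP a b \<in> H) \<and> (\<forall>a\<in>H. minv B X PP a \<in> H)
   \<and> omega B X PP H = H"

definition rmul :: "'l dcx \<Rightarrow> 'l set \<Rightarrow> 'l set \<Rightarrow> 'l mel set \<Rightarrow> 'l mel \<Rightarrow> 'l mel set" where
  "rmul B X PP H m = (\<lambda>h. mmul B X PP h m) ` H"

definition is_coset :: "'l dcx \<Rightarrow> 'l set \<Rightarrow> 'l set \<Rightarrow> 'l mel set \<Rightarrow> 'l mel set \<Rightarrow> bool" where
  "is_coset B X PP H R \<longleftrightarrow> (\<exists>m\<in>Mset B X PP. mmul B X PP m (minv B X PP m) \<in> H
       \<and> R = omega B X PP (rmul B X PP H m))"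

text \<open>edges of the omega-coset graph Gamma_H; labels in X, X^-1 (second component False) and P\<close>
definition GH_edges :: "'l dcx \<Rightarrow> 'l set \<Rightarrow> 'l set \<Rightarrow> 'l mel set
     \<Rightarrow> ('l mel set \<times> ('l \<times> bool) \<times> 'l mel set) set" where
  "GH_edges B X PP H = {(R1, a, R2). a \<in> (X \<times> UNIV) \<union> (PP \<times> {True})
      \<and> (\<exists>m\<in>Mset B X PP. mmul B X PP m (minv B X PP m) \<in> H
           \<and> R1 = omega B X PP (rmul B X PP H m)
           \<and> R2 = omega B X PP (rmul B X PP H (mmul B X PP m (mclass B X PP [a]))))
      \<and> is_coset B X PP H R2}"

text \<open>edge indices: each 1-cell gives an edge (True) and its inverse (False);
 each cell of dimension >= 2 gives a loop at its root.\<close>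
definition GE_idx :: "'e dcx \<Rightarrow> ('e \<times> bool) set" where
  "GE_idx E = {(e, b). e \<in> cells E \<and> cdim E e = 1}
            \<union> {(c, True) | c. c \<in> cells E \<and> 2 \<le> cdim E c}"

definition GE_edge :: "'e dcx \<Rightarrow> ('e \<Rightarrow> 'l) \<Rightarrow> ('e \<Rightarrow> 'v) \<Rightarrow> 'e \<times> bool \<Rightarrow> 'v \<times> ('l \<times> bool) \<times> 'v" where
  "GE_edge E ell \<iota> co = (case co of (c, b) \<Rightarrow>
     if cdim E c = 1 then
       (if b then (\<iota> (face E c 1), (ell c, True), \<iota> (face E c 0))
        else (\<iota> (face E c 0), (ell c, False), \<iota> (face E c 1)))
     else (\<iota> (root E c), (ell c, True), \<iota> (root E c)))"

text \<open>d i (i <= k) is the (k-1)-cell of E whose characteristic map is the restriction of the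
 lifted map to the face of Delta^k omitting v_i.  The compatibility condition says these glue
 to a well-defined map on the boundary of Delta^k.\<close>
definition lift_ok :: "'e dcx \<Rightarrow> 'c dcx \<Rightarrow> ('e \<Rightarrow> 'c) \<Rightarrow> 'c \<Rightarrow> nat \<Rightarrow> 'e \<Rightarrow> (nat \<Rightarrow> 'e) \<Rightarrow> bool" where
  "lift_ok E C f Ck k u d \<longleftrightarrow>
     (\<forall>i\<le>k. d i \<in> cells E \<and> cdim E (d i) = k - 1 \<and> f (d i) = face C Ck i)
   \<and> (\<forall>i j. i < j \<and> j \<le> k \<longrightarrow> face E (d j) i = face E (d i) (j - 1))
   \<and> (\<forall>j\<in>{1..k}. root E (d j) = u)"

text \<open>E with a new k-cell (None) attached along d\<close>
definition attach :: "'e dcx \<Rightarrow> nat \<Rightarrow> (nat \<Rightarrow> 'e) \<Rightarrow> 'e option dcx" where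
  "attach E k d = \<lparr> cells = Some ` cells E \<union> {None},
     cdim = (\<lambda>x. case x of None \<Rightarrow> k | Some c \<Rightarrow> cdim E c),
     face = (\<lambda>x i. case x of None \<Rightarrow> Some (d i) | Some c \<Rightarrow> Some (face E c i)) \<rparr>"

end

theory Submission
  imports Defs
begin

locale invmon =
  fixes M :: "'a set" and mul :: "'a \<Rightarrow> 'a \<Rightarrow> 'a" (infixl "\<cdot>" 70)
    and iv :: "'a \<Rightarrow> 'a" and e1 :: 'a
  assumes cl_mul[simp]: "x \<in> M \<Longrightarrow> y \<in> M \<Longrightarrow> x \<cdot> y \<in> M"
    and cl_inv[simp]: "x \<in> M \<Longrightarrow> iv x \<in> M"
    and cl_one[simp]: "e1 \<in> M"
    and assoc[simp]: "x \<in> M \<Longrightarrow> y \<in> M \<Longrightarrow> z \<in> M \<Longrightarrow> (x \<cdot> y) \<cdot> z = x \<cdot> (y \<cdot> z)"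
    and lunit[simp]: "x \<in> M \<Longrightarrow> e1 \<cdot> x = x"
    and runit[simp]: "x \<in> M \<Longrightarrow> x \<cdot> e1 = x"
    and ivv[simp]: "x \<in> M \<Longrightarrow> iv (iv x) = x"
    and ivmul[simp]: "x \<in> M \<Longrightarrow> y \<in> M \<Longrightarrow> iv (x \<cdot> y) = iv y \<cdot> iv x"
    and ax1: "x \<in> M \<Longrightarrow> x \<cdot> (iv x \<cdot> x) = x"
    and ax2: "x \<in> M \<Longrightarrow> y \<in> M \<Longrightarrow> x \<cdot> (iv x \<cdot> (y \<cdot> iv y)) = y \<cdot> (iv y \<cdot> (x \<cdot> iv x))"
begin

definition idem :: "'a \<Rightarrow> bool" where "idem f \<longleftrightarrow> f \<in> M \<and> f \<cdot> f = f"

lemma ax1': "x \<in> M \<Longrightarrow> z \<in> M \<Longrightarrow> x \<cdot> (iv x \<cdot> (x \<cdot> z)) = x \<cdot> z"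
  by (metis ax1 assoc cl_inv cl_mul)

lemma idem_inv: assumes "idem f" shows "iv f = f"
proof -
  have f: "f \<in> M" "f \<cdot> f = f" using assms by (auto simp: idem_def)
  let ?p = "f \<cdot> iv f" and ?q = "iv f \<cdot> f"
  have A: "f \<cdot> ?p = ?p" by (metis f assoc cl_inv)
  have B: "?q \<cdot> f = ?q" by (metis f assoc cl_inv)
  have "f = f \<cdot> f" using f by simp
  also have "\<dots> = (f \<cdot> ?q) \<cdot> (?p \<cdot> f)" using f ax1 by simp
  also have "\<dots> = f \<cdot> (?q \<cdot> ?p) \<cdot> f" using f by simp
  also have "?q \<cdot> ?p = ?p \<cdot> ?q" using ax2[of "iv f" f] f by simp
  also have "f \<cdot> (?p \<cdot> ?q) \<cdot> f = (f \<cdot> ?p) \<cdot> (?q \<cdot> f)" using f by simp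
  finally have fpq: "f = ?p \<cdot> ?q" using A B by simp
  have fi: "iv f \<cdot> iv f = iv f" by (metis f ivmul)
  have A': "iv f \<cdot> ?q = ?q" by (metis fi f assoc cl_inv)
  have B': "?p \<cdot> iv f = ?p" by (metis fi f assoc cl_inv)
  have "iv f = iv f \<cdot> iv f" using fi by simp
  also have "\<dots> = (iv f \<cdot> ?p) \<cdot> (?q \<cdot> iv f)" using f ax1[of "iv f"] by simp
  also have "\<dots> = iv f \<cdot> (?p \<cdot> ?q) \<cdot> iv f" using f by simp
  also have "?p \<cdot> ?q = ?q \<cdot> ?p" using ax2[of "iv f" f] f by simp
  also have "iv f \<cdot> (?q \<cdot> ?p) \<cdot> iv f = (iv f \<cdot> ?q) \<cdot> (?p \<cdot> iv f)" using f by simp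
  finally have "iv f = ?q \<cdot> ?p" using A' B' by simp
  also have "\<dots> = ?p \<cdot> ?q" using ax2[of "iv f" f] f by simp
  finally show ?thesis using fpq by simp
qed

lemma idem_pp: assumes "idem f" shows "f = f \<cdot> iv f"
  using assms idem_inv by (simp add: idem_def)

lemma idem_comm: assumes "idem f" "idem g" shows "f \<cdot> g = g \<cdot> f"
proof -
  have M: "f \<in> M" "g \<in> M" using assms by (auto simp: idem_def)
  have "f \<cdot> g = (f \<cdot> iv f) \<cdot> (g \<cdot> iv g)" using idem_pp assms by metis
  also have "\<dots> = (g \<cdot> iv g) \<cdot> (f \<cdot> iv f)" using ax2 M by simp
  also have "\<dots> = g \<cdot> f" using idem_pp assms by metis
  finally show ?thesis .
qed

lemma idem_M: "idem f \<Longrightarrow> f \<in> M" by (simp add: idem_def)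

lemma idem_left: "f \<in> M \<Longrightarrow> f \<cdot> f = f \<Longrightarrow> z \<in> M \<Longrightarrow> f \<cdot> (f \<cdot> z) = f \<cdot> z"
  by (metis assoc)

lemma idem_mul: assumes "idem f" "idem g" shows "idem (f \<cdot> g)"
proof -
  have M: "f \<in> M" "g \<in> M" using assms by (auto simp: idem_def)
  have "f \<cdot> g \<cdot> (f \<cdot> g) = f \<cdot> (g \<cdot> f) \<cdot> g" using M by simp
  also have "\<dots> = f \<cdot> (f \<cdot> g) \<cdot> g" using idem_comm assms by simp
  also have "\<dots> = (f \<cdot> f) \<cdot> (g \<cdot> g)" using M by simp
  finally show ?thesis using assms M by (simp add: idem_def idem_left)
qed

lemma idem_xx: "x \<in> M \<Longrightarrow> idem (x \<cdot> iv x)"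
  unfolding idem_def by (simp add: ax1')

lemma idem_one: "idem e1" by (simp add: idem_def)

lemma idem_conj: assumes "x \<in> M" "idem f" shows "idem (x \<cdot> f \<cdot> iv x)"
proof -
  have M: "f \<in> M" using assms by (auto simp: idem_def)
  have "x \<cdot> f \<cdot> iv x \<cdot> (x \<cdot> f \<cdot> iv x) = x \<cdot> (f \<cdot> (iv x \<cdot> x)) \<cdot> f \<cdot> iv x" using M assms by simp
  also have "f \<cdot> (iv x \<cdot> x) = (iv x \<cdot> x) \<cdot> f" using idem_comm[OF assms(2) idem_xx[of "iv x"]] assms by simp
  also have "x \<cdot> (iv x \<cdot> x \<cdot> f) \<cdot> f \<cdot> iv x = (x \<cdot> (iv x \<cdot> x)) \<cdot> (f \<cdot> f) \<cdot> iv x" using M assms by simp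
  finally show ?thesis using assms M ax1 by (simp add: idem_def idem_left)
qed

lemma conj_shift: assumes "x \<in> M" "idem f" shows "x \<cdot> f = (x \<cdot> f \<cdot> iv x) \<cdot> x"
proof -
  have M: "f \<in> M" using assms by (auto simp: idem_def)
  have "(x \<cdot> f \<cdot> iv x) \<cdot> x = x \<cdot> (f \<cdot> (iv x \<cdot> x))" using M assms by simp
  also have "f \<cdot> (iv x \<cdot> x) = (iv x \<cdot> x) \<cdot> f" using idem_comm[OF assms(2) idem_xx[of "iv x"]] assms by simp
  also have "x \<cdot> (iv x \<cdot> x \<cdot> f) = x \<cdot> f" using M assms ax1 by (simp add: ax1')
  finally show ?thesis by simp
qed

definition le :: "'a \<Rightarrow> 'a \<Rightarrow> bool" where
  "le a b \<longleftrightarrow> (\<exists>f\<in>M. f \<cdot> f = f \<and> a = f \<cdot> b)"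

lemma leI: "idem f \<Longrightarrow> a = f \<cdot> b \<Longrightarrow> le a b"
  unfolding le_def idem_def by auto

lemma leE: "le a b \<Longrightarrow> (\<And>f. idem f \<Longrightarrow> a = f \<cdot> b \<Longrightarrow> P) \<Longrightarrow> P"
  unfolding le_def idem_def by auto

lemma le_refl: "b \<in> M \<Longrightarrow> le b b"
  by (rule leI[OF idem_one]) simp

lemma le_trans: assumes "le a b" "le b c" "c \<in> M" shows "le a c"
proof -
  obtain f where f: "idem f" "a = f \<cdot> b" using assms(1) by (rule leE)
  obtain g where g: "idem g" "b = g \<cdot> c" using assms(2) by (rule leE)
  show ?thesis
    by (rule leI[OF idem_mul[OF f(1) g(1)]]) (simp add: f g idem_M assms)
qed

lemma le_mulR: assumes "le a b" "b \<in> M" "c \<in> M" shows "le (a \<cdot> c) (b \<cdot> c)"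
  using assms by (auto elim!: leE intro!: leI simp: idem_M)

lemma le_mulL: assumes "le a b" "b \<in> M" "c \<in> M" shows "le (c \<cdot> a) (c \<cdot> b)"
proof -
  obtain f where f: "idem f" "a = f \<cdot> b" using assms by (auto elim: leE)
  have "c \<cdot> a = (c \<cdot> f) \<cdot> b" using f assms idem_M by simp
  also have "c \<cdot> f = (c \<cdot> f \<cdot> iv c) \<cdot> c" using conj_shift assms f by simp
  finally have eq: "c \<cdot> a = (c \<cdot> f \<cdot> iv c) \<cdot> (c \<cdot> b)" using assms f idem_M by simp
  show ?thesis by (rule leI[OF idem_conj[OF assms(3) f(1)] eq])
qed

lemma le_M: "le a b \<Longrightarrow> b \<in> M \<Longrightarrow> a \<in> M"
  by (auto elim: leE simp: idem_M)

lemma le_idemR: assumes "a \<in> M" "idem f" shows "le (a \<cdot> f) a"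
  using conj_shift[OF assms] idem_conj[OF assms] by (rule leI[rotated])

lemma le_idemL: assumes "a \<in> M" "idem f" shows "le (f \<cdot> a) a"
  using assms by (rule_tac leI) auto

lemma le_inv: assumes "le a b" "b \<in> M" shows "le (iv a) (iv b)"
proof -
  obtain f where f: "idem f" "a = f \<cdot> b" using assms by (auto elim: leE)
  have "iv a = iv b \<cdot> f" using f assms idem_inv idem_M by simp
  thus ?thesis using le_idemR[of "iv b" f] assms f by simp
qed

lemma le_aa: assumes "le a b" "b \<in> M" shows "le (a \<cdot> iv a) (b \<cdot> iv b)"
proof -
  have a: "a \<in> M" using le_M assms by blast
  have "le (a \<cdot> iv a) (b \<cdot> iv a)" using le_mulR assms a by simp
  moreover have "le (b \<cdot> iv a) (b \<cdot> iv b)" using le_mulL le_inv assms by simp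
  ultimately show ?thesis using le_trans[of "a \<cdot> iv a" "b \<cdot> iv a" "b \<cdot> iv b"] assms by simp
qed

lemma le_antisym: assumes "le a b" "le b a" "b \<in> M" shows "a = b"
proof -
  obtain f where f: "idem f" "a = f \<cdot> b" using assms(1) by (rule leE)
  obtain g where g: "idem g" "b = g \<cdot> a" using assms(2) by (rule leE)
  have M: "f \<in> M" "g \<in> M" using f g idem_M by auto
  have aM: "a \<in> M" using le_M assms by blast
  have gb: "g \<cdot> b = b"
  proof -
    have "g \<cdot> b = g \<cdot> (g \<cdot> a)" using g(2) by (rule arg_cong)
    also have "\<dots> = (g \<cdot> g) \<cdot> a" using M aM by simp
    also have "\<dots> = b" using g idem_def by simp
    finally show ?thesis .
  qed
  have "b = g \<cdot> (f \<cdot> b)" using f g by simp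
  also have "\<dots> = (g \<cdot> f) \<cdot> b" using M assms by simp
  also have "g \<cdot> f = f \<cdot> g" using idem_comm f g by simp
  also have "(f \<cdot> g) \<cdot> b = f \<cdot> (g \<cdot> b)" using M assms by simp
  also have "\<dots> = a" using gb f by simp
  finally show ?thesis by simp
qed

lemma idem_absorb_inv: assumes "idem f" "a \<in> M" "f = f \<cdot> a" shows "f = f \<cdot> iv a"
proof -
  have M: "f \<in> M" using assms idem_M by auto
  have "f = f \<cdot> iv f" using idem_pp assms by simp
  also have "\<dots> = f \<cdot> a \<cdot> iv (f \<cdot> a)" by (simp only: assms(3)[symmetric])
  also have "\<dots> = f \<cdot> ((a \<cdot> iv a) \<cdot> iv f)" using M assms(2) by simp
  also have "iv f = f" using idem_inv assms by simp
  also have "(a \<cdot> iv a) \<cdot> f = f \<cdot> (a \<cdot> iv a)" using idem_comm idem_xx assms by simp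
  also have "f \<cdot> (f \<cdot> (a \<cdot> iv a)) = (f \<cdot> a) \<cdot> iv a" using M assms by (simp add: assoc[symmetric] idem_def[of f])
  finally show ?thesis using assms by simp
qed

definition om :: "'a set \<Rightarrow> 'a set" where
  "om N = {m \<in> M. \<exists>n\<in>N. le n m}"

definition rm :: "'a set \<Rightarrow> 'a \<Rightarrow> 'a set" where
  "rm H m = (\<lambda>h. h \<cdot> m) ` H"

definition cis :: "'a set \<Rightarrow> bool" where
  "cis H \<longleftrightarrow> H \<subseteq> M \<and> e1 \<in> H \<and> (\<forall>a\<in>H. \<forall>b\<in>H. a \<cdot> b \<in> H) \<and> (\<forall>a\<in>H. iv a \<in> H) \<and> om H = H"

lemma cisD: assumes "cis H"
  shows "H \<subseteq> M" "e1 \<in> H" "a \<in> H \<Longrightarrow> b \<in> H \<Longrightarrow> a \<cdot> b \<in> H" "a \<in> H \<Longrightarrow> iv a \<in> H"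
    "h \<in> H \<Longrightarrow> le h x \<Longrightarrow> x \<in> M \<Longrightarrow> x \<in> H"
proof -
  show "H \<subseteq> M" "e1 \<in> H" "a \<in> H \<Longrightarrow> b \<in> H \<Longrightarrow> a \<cdot> b \<in> H" "a \<in> H \<Longrightarrow> iv a \<in> H"
    using assms by (auto simp: cis_def)
  show "h \<in> H \<Longrightarrow> le h x \<Longrightarrow> x \<in> M \<Longrightarrow> x \<in> H"
    using assms unfolding cis_def om_def by blast
qed

lemma om_rm: "x \<in> om (rm H m) \<longleftrightarrow> x \<in> M \<and> (\<exists>h\<in>H. le (h \<cdot> m) x)"
  by (auto simp: om_def rm_def)

lemma own: assumes "cis H" "m \<in> M" shows "m \<in> om (rm H m)"
  using assms cisD(2)[OF assms(1)] le_refl unfolding om_rm by force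

lemma det: assumes "cis H" "m1 \<in> M" "m2 \<in> M" "a \<in> M" "om (rm H m1) = om (rm H m2)"
  shows "om (rm H (m1 \<cdot> a)) = om (rm H (m2 \<cdot> a))"
proof -
  have HM: "H \<subseteq> M" using cisD assms by auto
  have *: "om (rm H (p \<cdot> a)) \<subseteq> om (rm H (q \<cdot> a))"
    if pq: "p \<in> M" "q \<in> M" "om (rm H p) = om (rm H q)" for p q
  proof
    fix x assume "x \<in> om (rm H (p \<cdot> a))"
    then obtain h where x: "x \<in> M" "h \<in> H" "le (h \<cdot> (p \<cdot> a)) x" unfolding om_rm by auto
    have "p \<in> om (rm H q)" using own[OF assms(1) pq(1)] pq by simp
    then obtain h' where h': "h' \<in> H" "le (h' \<cdot> q) p" unfolding om_rm by auto
    have hM: "h \<in> M" "h' \<in> M" using HM x h' by auto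
    have "le (h \<cdot> (h' \<cdot> q) \<cdot> a) (h \<cdot> p \<cdot> a)"
      using le_mulR[OF le_mulL[OF h'(2)]] pq hM assms by simp
    hence "le ((h \<cdot> h') \<cdot> (q \<cdot> a)) (h \<cdot> (p \<cdot> a))" using pq hM assms by simp
    hence "le ((h \<cdot> h') \<cdot> (q \<cdot> a)) x" using le_trans x by blast
    moreover have "h \<cdot> h' \<in> H" using cisD(3)[OF assms(1)] x h' by simp
    ultimately show "x \<in> om (rm H (q \<cdot> a))" using x unfolding om_rm by blast
  qed
  show ?thesis using *[of m1 m2] *[of m2 m1] assms by auto
qed

lemma coset_elt: assumes "cis H" "n \<in> M" "q \<in> M" "q \<cdot> iv q \<in> H" "om (rm H n) = om (rm H q)"
  shows "n \<cdot> iv n \<in> H"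
proof -
  have HM: "H \<subseteq> M" using cisD assms by auto
  have "n \<in> om (rm H q)" using own[OF assms(1,2)] assms by simp
  then obtain h where h: "h \<in> H" "le (h \<cdot> q) n" unfolding om_rm by auto
  have hM: "h \<in> M" using h HM by auto
  have "le (h \<cdot> q \<cdot> iv (h \<cdot> q)) (n \<cdot> iv n)" using le_aa h assms by simp
  moreover have "h \<cdot> q \<cdot> iv (h \<cdot> q) = h \<cdot> (q \<cdot> iv q) \<cdot> iv h" using hM assms by simp
  moreover have "h \<cdot> (q \<cdot> iv q) \<cdot> iv h \<in> H" using cisD(3,4)[OF assms(1)] h assms by simp
  ultimately show ?thesis using cisD(5)[OF assms(1), of "h \<cdot> (q \<cdot> iv q) \<cdot> iv h" "n \<cdot> iv n"] assms by simp
qed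

lemma prefix_coset: assumes "cis H" "m \<in> M" "idem r" "p \<in> M" "q \<in> M" "r = r \<cdot> p \<cdot> q"
   "(m \<cdot> r) \<cdot> iv (m \<cdot> r) \<in> H"
  shows "(m \<cdot> p) \<cdot> iv (m \<cdot> p) \<in> H"
proof -
  have rM: "r \<in> M" using assms idem_M by auto
  let ?a = "m \<cdot> r \<cdot> p" and ?f = "q \<cdot> iv q"
  have aM: "?a \<in> M" using assms rM by simp
  have mr: "m \<cdot> r = ?a \<cdot> q" using assms rM by (metis assoc cl_mul)
  have fi: "iv ?f = ?f" using idem_inv[OF idem_xx[of q]] assms by simp
  have ff: "?f \<cdot> ?f = ?f" using idem_xx[of q] assms by (simp add: idem_def)
  have "(?a \<cdot> ?f) \<cdot> iv (?a \<cdot> ?f) = ?a \<cdot> (?f \<cdot> ?f) \<cdot> iv ?a"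
    using aM assms by (simp only: ivmul fi cl_mul cl_inv assoc)
  also have "\<dots> = (?a \<cdot> q) \<cdot> iv (?a \<cdot> q)" using aM assms ff by simp
  finally have "(m \<cdot> r) \<cdot> iv (m \<cdot> r) = (?a \<cdot> ?f) \<cdot> iv (?a \<cdot> ?f)" using mr by simp
  moreover have "le ((?a \<cdot> ?f) \<cdot> iv (?a \<cdot> ?f)) (?a \<cdot> iv ?a)"
    by (rule le_aa[OF le_idemR[OF aM idem_xx[OF assms(5)]] aM])
  moreover have "le (?a \<cdot> iv ?a) ((m \<cdot> p) \<cdot> iv (m \<cdot> p))"
  proof -
    have l: "le ?a (m \<cdot> p)" using le_mulR[OF le_idemR[OF assms(2,3)]] assms by simp
    show ?thesis using le_aa[OF l] assms by simp
  qed
  ultimately have "le ((m \<cdot> r) \<cdot> iv (m \<cdot> r)) ((m \<cdot> p) \<cdot> iv (m \<cdot> p))"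
    using le_trans[of "(m \<cdot> r) \<cdot> iv (m \<cdot> r)" "?a \<cdot> iv ?a" "(m \<cdot> p) \<cdot> iv (m \<cdot> p)"] assms aM
    by simp
  thus ?thesis using cisD(5)[OF assms(1) assms(7)] assms by simp
qed

end

lemma winv_append[simp]: "winv (u @ v) = winv v @ winv u" by (simp add: winv_def)
lemma winv_winv[simp]: "winv (winv u) = u" by (induct u) (auto simp: winv_def)
lemma winv_Nil[simp]: "winv [] = []" by (simp add: winv_def)
lemma winv_single[simp]: "winv [(a, b)] = [(a, \<not> b)]" by (simp add: winv_def)
lemma set_winv[simp]: "set (winv w) = (\<lambda>(a, b). (a, \<not> b)) ` set w"
  by (auto simp: winv_def)

lemma winv_A[simp]: "winv u \<in> lists (alph X PP) \<longleftrightarrow> u \<in> lists (alph X PP)"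
  by (auto simp: winv_def alph_def)

locale pres =
  fixes B :: "'l dcx" and X :: "'l set" and PP :: "'l set"
  assumes blA: "\<forall>\<rho>\<in>PP. set (bl B \<rho>) \<subseteq> alph X PP"
begin

abbreviation "A \<equiv> lists (alph X PP)"
abbreviation "cls \<equiv> mclass B X PP"

lemma mc_A: "mc B X PP u v \<Longrightarrow> u \<in> A \<and> v \<in> A"
  by (induct rule: mc.induct) (use blA in \<open>fastforce simp: alph_def\<close>)+

lemma cls_eq: "u \<in> A \<Longrightarrow> cls u = cls v \<longleftrightarrow> mc B X PP u v"
proof
  assume "u \<in> A" "cls u = cls v"
  then have "u \<in> cls v" unfolding mclass_def using mc_refl[of u] by (metis mem_Collect_eq)
  then show "mc B X PP u v" unfolding mclass_def by (simp add: mc_sym)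
next
  assume h: "mc B X PP u v"
  show "cls u = cls v" unfolding mclass_def
  proof (rule Collect_cong)
    fix w show "mc B X PP u w = mc B X PP v w"
      using h mc_trans[of B X PP u v w] mc_trans[of B X PP v u w] mc_sym[OF h] by blast
  qed
qed

lemma cls_eqI: "mc B X PP u v \<Longrightarrow> cls u = cls v"
  using cls_eq mc_A by blast

lemma cls_empty: "u \<notin> A \<Longrightarrow> cls u = {}"
  unfolding mclass_def using mc_A by blast

lemma cls_ne: "u \<in> A \<Longrightarrow> u \<in> cls u"
  unfolding mclass_def using mc_refl by blast

lemma cls_A: "cls u = cls v \<Longrightarrow> u \<in> A \<Longrightarrow> v \<in> A"
  using cls_eq mc_A by blast

lemma ctx: assumes "cls u = cls v" shows "cls (x @ u @ y) = cls (x @ v @ y)"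
proof (cases "x \<in> A \<and> y \<in> A \<and> u \<in> A")
  case True
  thus ?thesis using assms cls_eq mc_ctx cls_eqI by metis
next
  case False
  have uv: "u \<in> A \<longleftrightarrow> v \<in> A" using cls_A[OF assms] cls_A[OF assms[symmetric]] by blast
  have "x @ u @ y \<notin> A" "x @ v @ y \<notin> A" using False uv by auto
  thus ?thesis using cls_empty by simp
qed

lemma ctxL: "cls u = cls v \<Longrightarrow> cls (x @ u) = cls (x @ v)"
  using ctx[of u v x "[]"] by simp

lemma ctxR: "cls u = cls v \<Longrightarrow> cls (u @ y) = cls (v @ y)"
  using ctx[of u v "[]" y] by simp

lemma Ax1: "cls (w @ winv w @ w) = cls w"
  by (cases "w \<in> A") (auto intro!: cls_eqI mc_ax1 simp: cls_empty)

lemma Ax2: "cls (w @ winv w @ z @ winv z) = cls (z @ winv z @ w @ winv w)"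
proof (cases "w \<in> A \<and> z \<in> A")
  case True thus ?thesis by (auto intro!: cls_eqI mc_ax2)
next
  case False
  hence "w @ winv w @ z @ winv z \<notin> A" "z @ winv z @ w @ winv w \<notin> A" by auto
  thus ?thesis by (simp add: cls_empty)
qed

lemma swap: "cls (x @ w @ winv w @ z @ winv z @ y) = cls (x @ z @ winv z @ w @ winv w @ y)"
  using ctx[OF Ax2, of x w z y] by (simp only: append_assoc)

lemma idem_pq: assumes i: "cls (u @ u) = cls u"
  shows "cls u = cls (u @ winv u @ winv u @ u)"
proof -
  have "cls u = cls (u @ u)" using i by (rule sym)
  also have "\<dots> = cls ((u @ winv u @ u) @ u)" using ctxR[OF Ax1[of u, symmetric], of u] .
  also have "\<dots> = cls ((u @ winv u @ u) @ (u @ winv u @ u))" using ctxL[OF Ax1[of u, symmetric], of "u @ winv u @ u"] .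
  also have "\<dots> = cls (u @ (u @ winv u @ winv u @ u) @ u)"
    using swap[of u "winv u" u u] by (simp only: append_assoc winv_winv)
  also have "\<dots> = cls ((u @ u) @ winv u @ winv u @ (u @ u))" by (simp only: append_assoc)
  also have "\<dots> = cls (u @ winv u @ winv u @ (u @ u))" using ctxR[OF i, where y="winv u @ winv u @ (u @ u)"] by (simp only: append_assoc)
  also have "\<dots> = cls (u @ winv u @ winv u @ u)" using ctxL[OF i, of "u @ winv u @ winv u"] by (simp only: append_assoc)
  finally show ?thesis .
qed

lemma idem_comm_w: assumes u: "cls (u @ u) = cls u" and v: "cls (v @ v) = cls v"
  shows "cls (u @ v) = cls (v @ u)"
proof -
  let ?p = "u @ winv u" and ?q = "winv u @ u" and ?r = "v @ winv v" and ?s = "winv v @ v"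
  have "cls (u @ v) = cls ((?p @ ?q) @ v)" using ctxR[OF idem_pq[OF u], where y=v] by (simp only: append_assoc)
  also have "\<dots> = cls ((?p @ ?q) @ (?r @ ?s))" using ctxL[OF idem_pq[OF v], where x="?p @ ?q"] by (simp only: append_assoc)
  also have "\<dots> = cls (u @ winv u @ v @ winv v @ winv u @ u @ winv v @ v)"
    using swap[of "u @ winv u" "winv u" v "winv v @ v"] by (simp only: append_assoc winv_winv)
  also have "\<dots> = cls (v @ winv v @ u @ winv u @ winv u @ u @ winv v @ v)"
    using swap[of "[]" u v "winv u @ u @ winv v @ v"] by (simp only: append_assoc append_Nil)
  also have "\<dots> = cls (v @ winv v @ u @ winv u @ winv v @ v @ winv u @ u)"
    using swap[of "v @ winv v @ u @ winv u" "winv u" "winv v" "[]"] by (simp only: append_assoc winv_winv append_Nil2)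
  also have "\<dots> = cls (v @ winv v @ winv v @ v @ u @ winv u @ winv u @ u)"
    using swap[of "v @ winv v" u "winv v" "winv u @ u"] by (simp only: append_assoc winv_winv)
  also have "\<dots> = cls ((?r @ ?s) @ (?p @ ?q))" by (simp only: append_assoc)
  also have "\<dots> = cls (v @ (?p @ ?q))" using ctxR[OF idem_pq[OF v, symmetric], where y="?p @ ?q"] by (simp only: append_assoc)
  also have "\<dots> = cls (v @ u)" using ctxL[OF idem_pq[OF u, symmetric], where x=v] by (simp only: append_assoc)
  finally show ?thesis .
qed

lemma inv_unique: assumes x: "cls (a @ x @ a) = cls a" "cls (x @ a @ x) = cls x"
  and y: "cls (a @ y @ a) = cls a" "cls (y @ a @ y) = cls y"
  shows "cls x = cls y"
proof -
  have ix: "cls ((x @ a) @ (x @ a)) = cls (x @ a)" using ctxR[OF x(2), where y=a] by (simp only: append_assoc)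
  have iy: "cls ((y @ a) @ (y @ a)) = cls (y @ a)" using ctxR[OF y(2), where y=a] by (simp only: append_assoc)
  have jx: "cls ((a @ x) @ (a @ x)) = cls (a @ x)" using ctxL[OF x(2), where x=a] by (simp only: append_assoc)
  have jy: "cls ((a @ y) @ (a @ y)) = cls (a @ y)" using ctxL[OF y(2), where x=a] by (simp only: append_assoc)
  have "cls x = cls (x @ a @ x)" using x(2) by (rule sym)
  also have "\<dots> = cls (x @ (a @ y @ a) @ x)" using ctx[OF y(1)[symmetric], where x=x and y=x] .
  also have "\<dots> = cls ((x @ a) @ (y @ a) @ x)" by (simp only: append_assoc)
  also have "\<dots> = cls ((y @ a) @ (x @ a) @ x)"
    using ctxR[OF idem_comm_w[OF ix iy], where y=x] by (simp only: append_assoc)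
  also have "\<dots> = cls (y @ a @ (x @ a @ x))" by (simp only: append_assoc)
  also have "\<dots> = cls (y @ a @ x)" using ctxL[OF x(2), of "y @ a"] by (simp only: append_assoc)
  finally have 1: "cls x = cls (y @ a @ x)" .
  have "cls y = cls (y @ a @ y)" using y(2) by (rule sym)
  also have "\<dots> = cls (y @ (a @ x @ a) @ y)" using ctx[OF x(1)[symmetric], where x=y and y=y] .
  also have "\<dots> = cls (y @ (a @ x) @ (a @ y))" by (simp only: append_assoc)
  also have "\<dots> = cls (y @ (a @ y) @ (a @ x))"
    using ctxL[OF idem_comm_w[OF jx jy], where x=y] by (simp only: append_assoc)
  also have "\<dots> = cls ((y @ a @ y) @ a @ x)" by (simp only: append_assoc)
  also have "\<dots> = cls (y @ a @ x)" using ctxR[OF y(2), of "a @ x"] by (simp only: append_assoc)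
  finally show ?thesis using 1 by simp
qed

lemma winv_compat: assumes "mc B X PP u v" shows "mc B X PP (winv u) (winv v)"
proof -
  have A: "u \<in> A" "v \<in> A" using mc_A assms by auto
  have uv: "cls u = cls v" using cls_eqI assms by simp
  have "cls (winv u) = cls (winv v)"
  proof (rule inv_unique[of v])
    have "cls (v @ winv u @ v) = cls (u @ winv u @ u)"
      using ctx[OF uv[symmetric], of "[]" "winv u @ v"] ctxL[OF uv[symmetric], of "u @ winv u"]
      by (simp only: append_assoc append_Nil)
    thus "cls (v @ winv u @ v) = cls v" using Ax1[of u] uv by simp
    have "cls (winv u @ v @ winv u) = cls (winv u @ u @ winv u)"
      using ctx[OF uv[symmetric], of "winv u" "winv u"] .
    thus "cls (winv u @ v @ winv u) = cls (winv u)" using Ax1[of "winv u"] by simp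
    show "cls (v @ winv v @ v) = cls v" using Ax1 by simp
    show "cls (winv v @ v @ winv v) = cls (winv v)" using Ax1[of "winv v"] by simp
  qed
  thus ?thesis using cls_eq A by simp
qed

lemma cls_mul: "mmul B X PP (cls u) (cls v) = cls (u @ v)"
proof (cases "u \<in> A \<and> v \<in> A")
  case True
  show ?thesis
  proof (intro set_eqI iffI)
    fix w assume "w \<in> mmul B X PP (cls u) (cls v)"
    then obtain x y where h: "mc B X PP u x" "mc B X PP v y" "mc B X PP (x @ y) w"
      unfolding mmul_def mclass_def by auto
    have "cls (u @ v) = cls (x @ v)" using ctxR[OF cls_eqI[OF h(1)], where y=v] .
    also have "\<dots> = cls (x @ y)" using ctxL[OF cls_eqI[OF h(2)], where x=x] .
    also have "\<dots> = cls w" using cls_eqI h by simp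
    finally show "w \<in> cls (u @ v)" using cls_ne mc_A h(3) by blast
  next
    fix w assume "w \<in> cls (u @ v)"
    thus "w \<in> mmul B X PP (cls u) (cls v)" unfolding mmul_def
      using cls_ne True by (auto simp: mclass_def)
  qed
next
  case False
  hence "cls u = {} \<or> cls v = {}" using cls_empty by auto
  thus ?thesis using False cls_empty by (auto simp: mmul_def)
qed

lemma cls_inv: assumes "u \<in> A" shows "minv B X PP (cls u) = cls (winv u)"
proof (intro set_eqI iffI)
  fix w assume "w \<in> minv B X PP (cls u)"
  then obtain x where "mc B X PP u x" "mc B X PP (winv x) w" unfolding minv_def mclass_def by auto
  thus "w \<in> cls (winv u)" unfolding mclass_def using winv_compat mc_trans by blast
next
  fix w assume "w \<in> cls (winv u)"
  thus "w \<in> minv B X PP (cls u)" unfolding minv_def mclass_def using mc_refl[OF assms] by auto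
qed

lemma Mset_iff: "a \<in> Mset B X PP \<longleftrightarrow> (\<exists>u\<in>A. a = cls u)"
  by (auto simp: Mset_def)

sublocale im: invmon "Mset B X PP" "mmul B X PP" "minv B X PP" "cls []"
proof
  fix x y z assume "x \<in> Mset B X PP" "y \<in> Mset B X PP" "z \<in> Mset B X PP"
  then obtain u v w where u: "u \<in> A" "x = cls u" and v: "v \<in> A" "y = cls v" and w: "w \<in> A" "z = cls w"
    by (auto simp: Mset_iff)
  show "mmul B X PP x y \<in> Mset B X PP" using u v cls_mul unfolding Mset_iff
    by (metis append_in_lists_conv)
  show "minv B X PP x \<in> Mset B X PP" using u cls_inv unfolding Mset_iff
    by (metis winv_A)
  show "mmul B X PP (mmul B X PP x y) z = mmul B X PP x (mmul B X PP y z)" using u v w cls_mul by simp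
  show "mmul B X PP (cls []) x = x" using u cls_mul by simp
  show "mmul B X PP x (cls []) = x" using u cls_mul by simp
  show "minv B X PP (minv B X PP x) = x" using u cls_inv by simp
  show "minv B X PP (mmul B X PP x y) = mmul B X PP (minv B X PP y) (minv B X PP x)" using u v cls_inv cls_mul by simp
  show "mmul B X PP x (mmul B X PP (minv B X PP x) x) = x" using u cls_inv cls_mul Ax1 by simp
  show "mmul B X PP x (mmul B X PP (minv B X PP x) (mmul B X PP y (minv B X PP y))) =
        mmul B X PP y (mmul B X PP (minv B X PP y) (mmul B X PP x (minv B X PP x)))"
    using u v cls_inv cls_mul Ax2 by simp
next
  show "cls [] \<in> Mset B X PP" by (auto simp: Mset_iff)
qed

lemma le_eq: "im.le = mleq B X PP"
  by (intro ext) (simp add: im.le_def mleq_def)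

lemma om_eq: "im.om = omega B X PP"
  by (intro ext) (simp add: im.om_def omega_def le_eq)

lemma rm_eq: "im.rm = rmul B X PP"
  by (intro ext) (simp add: im.rm_def rmul_def)

lemma cis_eq: "im.cis = closed_inv_submonoid B X PP"
  by (intro ext) (simp add: im.cis_def closed_inv_submonoid_def om_eq)

end

lemma dcxF1: "is_dcx K \<Longrightarrow> c \<in> cells K \<Longrightarrow> i \<le> cdim K c \<Longrightarrow> 0 < cdim K c \<Longrightarrow>
   face K c i \<in> cells K \<and> cdim K (face K c i) = cdim K c - 1"
  unfolding is_dcx_def by blast

lemma dcxF2: "is_dcx K \<Longrightarrow> c \<in> cells K \<Longrightarrow> i < j \<Longrightarrow> j \<le> cdim K c \<Longrightarrow> 2 \<le> cdim K c \<Longrightarrow>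
   face K (face K c j) i = face K (face K c i) (j - 1)"
  unfolding is_dcx_def by blast

lemma rootf_cell: "is_dcx K \<Longrightarrow> c \<in> cells K \<Longrightarrow> cdim K c = n \<Longrightarrow>
   rootf K n c \<in> cells K \<and> cdim K (rootf K n c) = 0"
proof (induct n arbitrary: c)
  case 0 thus ?case by simp
next
  case (Suc n)
  have "face K c (Suc n) \<in> cells K \<and> cdim K (face K c (Suc n)) = n"
    using dcxF1[OF Suc(2,3)] Suc(4) by simp
  thus ?case using Suc by simp
qed

lemma root_vert: "is_dcx K \<Longrightarrow> c \<in> cells K \<Longrightarrow> root K c \<in> verts K"
  using rootf_cell[of K c "cdim K c"] by (simp add: root_def verts_def)

lemma root_face_aux: "is_dcx K \<Longrightarrow> c \<in> cells K \<Longrightarrow> cdim K c = Suc n \<Longrightarrow> 1 \<le> i \<Longrightarrow> i \<le> Suc n \<Longrightarrow>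
   rootf K n (face K c i) = rootf K n (face K c (Suc n))"
proof (induct n arbitrary: c i)
  case 0 thus ?case by (cases i) auto
next
  case (Suc n)
  show ?case
  proof (cases "i = Suc (Suc n)")
    case True thus ?thesis by simp
  next
    case False
    hence i: "i \<le> Suc n" using Suc by simp
    let ?c' = "face K c (Suc (Suc n))"
    have c': "?c' \<in> cells K" "cdim K ?c' = Suc n" using dcxF1[OF Suc(2,3)] Suc(4) by auto
    have F: "face K ?c' i = face K (face K c i) (Suc n)"
      using dcxF2[OF Suc(2,3), of i "Suc (Suc n)"] i Suc(4) by simp
    have "rootf K (Suc n) (face K c i) = rootf K n (face K ?c' i)" using F by simp
    also have "\<dots> = rootf K n (face K ?c' (Suc n))" by (rule Suc(1)[OF Suc(2) c'(1) c'(2) Suc(5) i])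
    also have "\<dots> = rootf K (Suc n) ?c'" by simp
    finally show ?thesis .
  qed
qed

lemma root_face: assumes "is_dcx K" "c \<in> cells K" "cdim K c = Suc n" "1 \<le> i" "i \<le> Suc n"
  shows "root K (face K c i) = root K c"
proof -
  have "cdim K (face K c i) = n" using dcxF1[OF assms(1,2)] assms by simp
  thus ?thesis using root_face_aux[OF assms] assms(3) by (simp add: root_def)
qed

lemma root_face0_aux: "is_dcx K \<Longrightarrow> c \<in> cells K \<Longrightarrow> cdim K c = Suc n \<Longrightarrow>
   rootf K n (face K c 0) = face K (e01f K (Suc n) c) 0"
proof (induct n arbitrary: c)
  case 0 thus ?case by simp
next
  case (Suc n)
  let ?c' = "face K c (Suc (Suc n))"
  have c': "?c' \<in> cells K" "cdim K ?c' = Suc n" using dcxF1[OF Suc(2,3)] Suc(4) by auto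
  have F: "face K ?c' 0 = face K (face K c 0) (Suc n)"
    using dcxF2[OF Suc(2,3), of 0 "Suc (Suc n)"] Suc(4) by simp
  have "rootf K (Suc n) (face K c 0) = rootf K n (face K ?c' 0)" using F by simp
  also have "\<dots> = face K (e01f K (Suc n) ?c') 0" using Suc(1)[OF Suc(2) c'] .
  finally show ?case by simp
qed

lemma root_face0: assumes "is_dcx K" "c \<in> cells K" "cdim K c = Suc n"
  shows "root K (face K c 0) = face K (e01 K c) 0"
proof -
  have "cdim K (face K c 0) = n" using dcxF1[OF assms(1,2)] assms by simp
  thus ?thesis using root_face0_aux[OF assms] assms(3) by (simp add: root_def e01_def)
qed

lemma e01_aux: "is_dcx K \<Longrightarrow> c \<in> cells K \<Longrightarrow> cdim K c = Suc n \<Longrightarrow>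
   e01f K (Suc n) c \<in> cells K \<and> cdim K (e01f K (Suc n) c) = 1 \<and> rootf K 1 (e01f K (Suc n) c) = rootf K (Suc n) c"
proof (induct n arbitrary: c)
  case 0 thus ?case by simp
next
  case (Suc n)
  let ?c' = "face K c (Suc (Suc n))"
  have c': "?c' \<in> cells K" "cdim K ?c' = Suc n" using dcxF1[OF Suc(2,3)] Suc(4) by auto
  show ?case using Suc(1)[OF Suc(2) c'] by simp
qed

lemma e01_cell: assumes "is_dcx K" "c \<in> cells K" "cdim K c = Suc n"
  shows "e01 K c \<in> cells K" "cdim K (e01 K c) = 1" "root K (e01 K c) = root K c"
  using e01_aux[OF assms] assms(3) by (auto simp: e01_def root_def simp del: rootf.simps)

lemma e01_face_aux: "is_dcx K \<Longrightarrow> c \<in> cells K \<Longrightarrow> cdim K c = Suc (Suc n) \<Longrightarrow> 2 \<le> j \<Longrightarrow> j \<le> Suc (Suc n) \<Longrightarrow>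
   e01f K (Suc n) (face K c j) = e01f K (Suc n) (face K c (Suc (Suc n)))"
proof (induct n arbitrary: c j)
  case 0
  hence "j = Suc (Suc 0)" by simp
  thus ?case by simp
next
  case (Suc n)
  show ?case
  proof (cases "j = Suc (Suc (Suc n))")
    case True thus ?thesis by simp
  next
    case False
    hence j: "j \<le> Suc (Suc n)" using Suc by simp
    let ?c' = "face K c (Suc (Suc (Suc n)))"
    have c': "?c' \<in> cells K" "cdim K ?c' = Suc (Suc n)" using dcxF1[OF Suc(2,3)] Suc(4) by auto
    have F: "face K ?c' j = face K (face K c j) (Suc (Suc n))"
      using dcxF2[OF Suc(2,3), of j "Suc (Suc (Suc n))"] j Suc(4) by simp
    have "e01f K (Suc (Suc n)) (face K c j) = e01f K (Suc n) (face K ?c' j)" using F by simp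
    also have "\<dots> = e01f K (Suc n) (face K ?c' (Suc (Suc n)))" by (rule Suc(1)[OF Suc(2) c'(1) c'(2) Suc(5) j])
    also have "\<dots> = e01f K (Suc (Suc n)) ?c'" by simp
    finally show ?thesis .
  qed
qed

lemma e01_face: assumes "is_dcx K" "c \<in> cells K" "cdim K c = Suc (Suc n)" "2 \<le> j" "j \<le> Suc (Suc n)"
  shows "e01 K (face K c j) = e01 K c"
proof -
  have "cdim K (face K c j) = Suc n" using dcxF1[OF assms(1,2)] assms by simp
  thus ?thesis using e01_face_aux[OF assms] assms(3) by (simp add: e01_def)
qed

lemma vtxf0: "vtxf K n c 0 = rootf K n c"
  by (induct n arbitrary: c) auto

lemma vert0: "vert K c 0 = root K c"
  by (simp add: vert_def root_def vtxf0)

lemma vertL: "cdim K c = Suc n \<Longrightarrow> cdim K (face K c 0) = n \<Longrightarrow> vert K c (Suc n) = vert K (face K c 0) n"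
  by (simp add: vert_def)

lemma root1: "cdim K c = 1 \<Longrightarrow> root K c = face K c 1"
  by (simp add: root_def)

lemma root0: "cdim K c = 0 \<Longrightarrow> root K c = c"
  by (simp add: root_def)

section \<open>immersions\<close>

lemma imm_cell: "is_imm D C f \<Longrightarrow> c \<in> cells D \<Longrightarrow> f c \<in> cells C \<and> cdim C (f c) = cdim D c"
  unfolding is_imm_def by blast

lemma imm_face: "is_imm D C f \<Longrightarrow> c \<in> cells D \<Longrightarrow> i \<le> cdim D c \<Longrightarrow> 0 < cdim D c \<Longrightarrow>
   f (face D c i) = face C (f c) i"
  unfolding is_imm_def by blast

lemma imm_inj: "is_imm D C f \<Longrightarrow> c \<in> cells D \<Longrightarrow> c' \<in> cells D \<Longrightarrow> cdim D c = cdim D c' \<Longrightarrow>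
   f c = f c' \<Longrightarrow> i \<le> cdim D c \<Longrightarrow> vert D c i = vert D c' i \<Longrightarrow> c = c'"
  unfolding is_imm_def by blast

lemma imm_rootf: "is_imm D C f \<Longrightarrow> is_dcx D \<Longrightarrow> c \<in> cells D \<Longrightarrow> cdim D c = n \<Longrightarrow>
   f (rootf D n c) = rootf C n (f c)"
proof (induct n arbitrary: c)
  case 0 thus ?case by simp
next
  case (Suc n)
  have "face D c (Suc n) \<in> cells D \<and> cdim D (face D c (Suc n)) = n"
    using dcxF1[OF Suc(3,4)] Suc(5) by simp
  thus ?case using Suc imm_face[OF Suc(2,4)] by simp
qed

lemma imm_root: "is_imm D C f \<Longrightarrow> is_dcx D \<Longrightarrow> c \<in> cells D \<Longrightarrow> f (root D c) = root C (f c)"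
  using imm_rootf imm_cell by (metis root_def)

lemma imm_e01f: "is_imm D C f \<Longrightarrow> is_dcx D \<Longrightarrow> c \<in> cells D \<Longrightarrow> cdim D c = Suc n \<Longrightarrow>
   f (e01f D (Suc n) c) = e01f C (Suc n) (f c)"
proof (induct n arbitrary: c)
  case 0 thus ?case by simp
next
  case (Suc n)
  have "face D c (Suc (Suc n)) \<in> cells D \<and> cdim D (face D c (Suc (Suc n))) = Suc n"
    using dcxF1[OF Suc(3,4)] Suc(5) by simp
  thus ?case using Suc imm_face[OF Suc(2,4)] by simp
qed

lemma imm_e01: "is_imm D C f \<Longrightarrow> is_dcx D \<Longrightarrow> c \<in> cells D \<Longrightarrow> cdim D c = Suc n \<Longrightarrow>
   f (e01 D c) = e01 C (f c)"
  using imm_e01f imm_cell by (metis e01_def)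

section \<open>attaching\<close>

lemma rootf_attach: "rootf (attach E k d) n (Some c) = Some (rootf E n c)"
  by (induct n arbitrary: c) (auto simp: attach_def)

lemma attach_cells: "cells (attach E k d) = Some ` cells E \<union> {None}"
  and attach_cdim: "cdim (attach E k d) (Some c) = cdim E c" "cdim (attach E k d) None = k"
  and attach_face: "face (attach E k d) (Some c) i = Some (face E c i)" "face (attach E k d) None i = Some (d i)"
  by (simp_all add: attach_def)

lemma adj_attach: assumes k: "2 \<le> k" shows "adj (attach E k d) = map_prod Some Some ` adj E"
proof (intro set_eqI iffI)
  fix p assume "p \<in> adj (attach E k d)"
  then obtain e where e: "p = (face (attach E k d) e 1, face (attach E k d) e 0)" "e \<in> cells (attach E k d)"
     "cdim (attach E k d) e = 1" unfolding adj_def by blast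
  then obtain e' where e': "e = Some e'" "e' \<in> cells E" using k by (cases e) (auto simp: attach_cells attach_cdim)
  have "(face E e' 1, face E e' 0) \<in> adj E" using e e' unfolding adj_def by (auto simp: attach_cdim)
  thus "p \<in> map_prod Some Some ` adj E" using e e' by (force simp: attach_face)
next
  fix p assume "p \<in> map_prod Some Some ` adj E"
  then obtain e where "p = (Some (face E e 1), Some (face E e 0))" "e \<in> cells E" "cdim E e = 1"
    unfolding adj_def by auto
  thus "p \<in> adj (attach E k d)" unfolding adj_def
    by (intro CollectI exI[of _ "Some e"]) (simp add: attach_cells attach_cdim attach_face)
qed

lemma verts_attach: assumes k: "2 \<le> k" shows "verts (attach E k d) = Some ` verts E"
proof (intro set_eqI iffI)
  fix x assume "x \<in> verts (attach E k d)"
  thus "x \<in> Some ` verts E" using k by (cases x) (auto simp: verts_def attach_cells attach_cdim)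
next
  fix x assume "x \<in> Some ` verts E"
  thus "x \<in> verts (attach E k d)" by (auto simp: verts_def attach_cells attach_cdim)
qed

lemma rtrancl_Some: "(x, y) \<in> R\<^sup>* \<Longrightarrow> (Some x, Some y) \<in> (map_prod Some Some ` R)\<^sup>*"
proof (induct rule: rtrancl_induct)
  case base thus ?case by simp
next
  case (step y z)
  have "(Some y, Some z) \<in> map_prod Some Some ` R" using step by force
  thus ?case using step by (meson rtrancl.rtrancl_into_rtrancl)
qed

lemma attach_dcx: assumes E: "is_dcx E" and k: "2 \<le> k"
  and d1: "\<forall>i\<le>k. d i \<in> cells E \<and> cdim E (d i) = k - 1"
  and d2: "\<forall>i j. i < j \<and> j \<le> k \<longrightarrow> face E (d j) i = face E (d i) (j - 1)"
  shows "is_dcx (attach E k d)"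
proof -
  let ?K = "attach E k d"
  have c1: "\<forall>c\<in>cells ?K. \<forall>i\<le>cdim ?K c. 0 < cdim ?K c \<longrightarrow>
          face ?K c i \<in> cells ?K \<and> cdim ?K (face ?K c i) = cdim ?K c - 1"
    using E d1 unfolding is_dcx_def attach_def by auto
  have c2: "\<forall>c\<in>cells ?K. \<forall>i j. i < j \<and> j \<le> cdim ?K c \<and> 2 \<le> cdim ?K c \<longrightarrow>
          face ?K (face ?K c j) i = face ?K (face ?K c i) (j - 1)"
    using E d2 unfolding is_dcx_def attach_def by auto
  obtain N where N: "\<forall>c\<in>cells E. cdim E c \<le> N" using E unfolding is_dcx_def by blast
  have c3: "\<exists>N. \<forall>c\<in>cells ?K. cdim ?K c \<le> N"
    by (rule exI[of _ "max N k"]) (use N in \<open>auto simp: attach_def\<close>)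
  have c4: "verts ?K \<noteq> {}"
  proof -
    have "verts E \<noteq> {}" using E unfolding is_dcx_def by blast
    thus ?thesis using verts_attach[OF k, of E d] by simp
  qed
  have c5: "\<forall>x\<in>verts ?K. \<forall>y\<in>verts ?K. (x, y) \<in> (adj ?K \<union> (adj ?K)\<inverse>)\<^sup>*"
  proof (intro ballI)
    fix x y assume "x \<in> verts ?K" "y \<in> verts ?K"
    then obtain x' y' where xy: "x = Some x'" "y = Some y'" "x' \<in> verts E" "y' \<in> verts E"
      using verts_attach[OF k, of E d] by auto
    have "(x', y') \<in> (adj E \<union> (adj E)\<inverse>)\<^sup>*" using E xy unfolding is_dcx_def by blast
    hence "(x, y) \<in> (map_prod Some Some ` (adj E \<union> (adj E)\<inverse>))\<^sup>*" using rtrancl_Some xy by metis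
    moreover have "map_prod Some Some ` (adj E \<union> (adj E)\<inverse>) = adj ?K \<union> (adj ?K)\<inverse>"
      using adj_attach[OF k, of E d] by auto
    ultimately show "(x, y) \<in> (adj ?K \<union> (adj ?K)\<inverse>)\<^sup>*" by simp
  qed
  show ?thesis unfolding is_dcx_def using c1 c2 c3 c4 c5 by blast
qed

lemma attach_root: assumes "1 \<le> k" "root E (d k) = u" "cdim E (d k) = k - 1"
  shows "root (attach E k d) None = Some u"
proof -
  obtain k' where k: "k = Suc k'" using assms by (cases k) auto
  have "root (attach E k d) None = rootf (attach E k d) k' (Some (d k))"
    by (simp add: root_def attach_def k)
  also have "\<dots> = Some (rootf E k' (d k))" by (rule rootf_attach)
  finally show ?thesis using assms k by (simp add: root_def)
qed

locale setting =
  fixes B :: "'l dcx" and X :: "'l set" and P :: "nat \<Rightarrow> 'l set" and n :: nat and b0 :: 'l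
    and C :: "'c dcx" and ellC :: "'c \<Rightarrow> 'l"
    and E :: "'e dcx" and ellE :: "'e \<Rightarrow> 'l" and fS :: "'e \<Rightarrow> 'c"
    and H :: "'l mel set" and \<iota> :: "'e \<Rightarrow> 'l mel set"
    and S :: "('l mel set \<times> ('l \<times> bool) \<times> 'l mel set) set"
    and k :: nat and u :: 'e and \<rho> :: 'l and Ck :: 'c
  assumes B: "is_B B X P n b0"
    and C: "is_labeled C B ellC"
    and H: "closed_inv_submonoid B X (Pall P n) H"
    and k: "2 \<le> k" "k \<le> n"
    and E: "is_labeled E B ellE"
    and fS: "is_imm E C fS" "\<forall>c\<in>cells E. ellC (fS c) = ellE c"
    and vert_bij: "bij_betw \<iota> (verts E) {R. is_coset B X (Pall P n) H R}"
    and S_sub: "S \<subseteq> GH_edges B X (Pall P n) H"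
    and edge_bij: "bij_betw (GE_edge E ellE \<iota>) (GE_idx E) S"
    and S_low: "\<forall>(R1, a, R2) \<in> GH_edges B X (Pall P n) H.
                  fst a \<in> X \<union> (\<Union>j\<in>{2..<k}. P j) \<longrightarrow> (R1, a, R2) \<in> S"
    and u: "u \<in> verts E"
    and loop: "(\<iota> u, (\<rho>, True), \<iota> u) \<in> GH_edges B X (Pall P n) H"
              "(\<iota> u, (\<rho>, True), \<iota> u) \<notin> S"
    and rho: "\<rho> \<in> P k"
    and Ck: "Ck \<in> cells C" "cdim C Ck = k" "ellC Ck = \<rho>" "root C Ck = fS u"
begin

abbreviation "PP \<equiv> Pall P n"

lemma Bd: "is_dcx B" using B by (simp add: is_B_def)
lemma Cd: "is_dcx C" using C by (simp add: is_labeled_def)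
lemma Ed: "is_dcx E" using E by (simp add: is_labeled_def)
lemma Ci: "is_imm C B ellC" using C by (simp add: is_labeled_def)
lemma Ei: "is_imm E B ellE" using E by (simp add: is_labeled_def)

lemma cellsB: "cells B = {b0} \<union> X \<union> PP" and dimb0: "cdim B b0 = 0"
  and dimX: "x \<in> X \<Longrightarrow> cdim B x = 1"
  and dimP: "j \<in> {2..n} \<Longrightarrow> x \<in> P j \<Longrightarrow> cdim B x = j"
  using B by (auto simp: is_B_def)

lemma PP_iff: "x \<in> PP \<longleftrightarrow> (\<exists>j\<in>{2..n}. x \<in> P j)" by (simp add: Pall_def)

lemma classB1: "c \<in> cells B \<Longrightarrow> cdim B c = 1 \<Longrightarrow> c \<in> X"
  using cellsB dimb0 dimP PP_iff by fastforce

lemma classB2: "c \<in> cells B \<Longrightarrow> cdim B c = j \<Longrightarrow> 2 \<le> j \<Longrightarrow> c \<in> P j \<and> j \<le> n"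
proof -
  assume h: "c \<in> cells B" "cdim B c = j" "2 \<le> j"
  have "c \<noteq> b0" "c \<notin> X" using h dimb0 dimX by auto
  then obtain j' where "j' \<in> {2..n}" "c \<in> P j'" using h cellsB PP_iff by auto
  thus ?thesis using h dimP by force
qed

lemma classB: "c \<in> cells B \<Longrightarrow> 1 \<le> cdim B c \<Longrightarrow> c \<in> X \<union> PP"
  using cellsB dimb0 by fastforce

lemma rhoB: "\<rho> \<in> cells B" "cdim B \<rho> = k" "\<rho> \<in> PP"
  using rho k dimP cellsB PP_iff by auto

lemma faceB: "i \<le> k \<Longrightarrow> face B \<rho> i \<in> cells B \<and> cdim B (face B \<rho> i) = k - 1"
  using dcxF1[OF Bd rhoB(1)] rhoB k by simp

lemma bl_set: assumes "r \<in> PP" shows "set (bl B r) \<subseteq> alph X PP"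
proof -
  obtain j where j: "j \<in> {2..n}" "r \<in> P j" using assms PP_iff by auto
  have r: "r \<in> cells B" "cdim B r = j" using j dimP cellsB assms by auto
  have f: "i \<le> j \<Longrightarrow> face B r i \<in> X \<union> PP" for i
  proof -
    assume i: "i \<le> j"
    have "face B r i \<in> cells B" "1 \<le> cdim B (face B r i)" using dcxF1[OF Bd r(1), of i] r j i by auto
    thus ?thesis using classB by blast
  qed
  obtain j' where j': "j = Suc j'" using j by (cases j) auto
  have e: "e01 B r \<in> X" using e01_cell[OF Bd r(1), of j'] r j' classB1 by simp
  have f0: "face B r 0 \<in> X \<union> PP" "face B r 1 \<in> X \<union> PP" "face B r 2 \<in> X \<union> PP"
    using f j by auto
  have fm: "set (map (\<lambda>i. (face B r i, True)) (rev [1..<j + 1])) \<subseteq> (X \<union> PP) \<times> UNIV"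
  proof
    fix p assume "p \<in> set (map (\<lambda>i. (face B r i, True)) (rev [1..<j + 1]))"
    then obtain i where i: "i \<in> set [1..<j + 1]" "p = (face B r i, True)" by auto
    hence "i \<le> j" by auto
    thus "p \<in> (X \<union> PP) \<times> UNIV" using f[of i] i by blast
  qed
  show ?thesis unfolding bl_def Let_def alph_def using e r(2) f0 fm by auto
qed

sublocale pres B X PP
  by unfold_locales (use bl_set in auto)

abbreviation "MM \<equiv> Mset B X PP"
abbreviation mul (infixl "\<cdot>" 70) where "mul \<equiv> mmul B X PP"
abbreviation "iv \<equiv> minv B X PP"
abbreviation "Om m \<equiv> omega B X PP (rmul B X PP H m)"

lemma Om_eq: "Om m = im.om (im.rm H m)" by (simp add: om_eq rm_eq)

lemma Hc: "im.cis H" using H cis_eq by simp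

lemma letterM: "a \<in> X \<union> PP \<Longrightarrow> cls [(a, b)] \<in> MM"
  using Mset_iff by (auto simp: alph_def)

lemma letter_inv: "a \<in> X \<union> PP \<Longrightarrow> cls [(a, False)] = iv (cls [(a, True)])"
  using cls_inv[of "[(a, True)]"] by (auto simp: alph_def)

lemma letter_idem: "a \<in> PP \<Longrightarrow> im.idem (cls [(a, True)])"
  unfolding im.idem_def using letterM cls_mul cls_eqI[OF mc_idem, of a] by simp

lemma vcoset: "x \<in> verts E \<Longrightarrow> \<exists>q\<in>MM. q \<cdot> iv q \<in> H \<and> \<iota> x = Om q"
  using vert_bij unfolding bij_betw_def is_coset_def by blast

lemma iota_inj: "x \<in> verts E \<Longrightarrow> y \<in> verts E \<Longrightarrow> \<iota> x = \<iota> y \<Longrightarrow> x = y"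
  using vert_bij unfolding bij_betw_def inj_on_def by blast

lemma is_cosetI: "q \<in> MM \<Longrightarrow> q \<cdot> iv q \<in> H \<Longrightarrow> is_coset B X PP H (Om q)"
  unfolding is_coset_def by blast

lemma mkedge: assumes "a \<in> X \<union> PP" "n' \<in> MM" "n' \<cdot> iv n' \<in> H" "R1 = Om n'" "R2 = Om (n' \<cdot> cls [(a, True)])"
   "is_coset B X PP H R2"
  shows "(R1, (a, True), R2) \<in> GH_edges B X PP H"
  unfolding GH_edges_def using assms by blast

lemma face_vert: "c \<in> cells E \<Longrightarrow> cdim E c = 1 \<Longrightarrow> i \<le> 1 \<Longrightarrow> face E c i \<in> verts E"
  using dcxF1[OF Ed] by (simp add: verts_def)

lemma loop_in: assumes x: "x \<in> verts E" and l: "l \<in> P j" "2 \<le> j" "j < k"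
  and g: "(\<iota> x, (l, True), \<iota> x) \<in> GH_edges B X PP H"
  shows "\<exists>c. c \<in> cells E \<and> 2 \<le> cdim E c \<and> root E c = x \<and> ellE c = l"
proof -
  have "(\<iota> x, (l, True), \<iota> x) \<in> S" using S_low g l by fastforce
  then obtain c b where cb: "(c, b) \<in> GE_idx E" "GE_edge E ellE \<iota> (c, b) = (\<iota> x, (l, True), \<iota> x)"
    using edge_bij unfolding bij_betw_def by force
  have ldim: "cdim B l = j" using dimP l k by auto
  have c: "c \<in> cells E" using cb(1) by (auto simp: GE_idx_def)
  have cd: "cdim B (ellE c) = cdim E c" using imm_cell[OF Ei c] by simp
  show ?thesis
  proof (cases "cdim E c = 1")
    case True
    hence "ellE c = l" using cb(2) by (auto simp: GE_edge_def split: if_splits)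
    thus ?thesis using True cd ldim l by simp
  next
    case False
    hence c2: "2 \<le> cdim E c" using cb(1) by (auto simp: GE_idx_def)
    have "\<iota> (root E c) = \<iota> x" "ellE c = l" using cb(2) False by (auto simp: GE_edge_def)
    moreover have "root E c \<in> verts E" using root_vert[OF Ed c] .
    ultimately show ?thesis using iota_inj x c c2 by blast
  qed
qed

lemma edge_in: assumes x: "x \<in> verts E" and l: "l \<in> X"
  and g: "(\<iota> x, (l, True), R) \<in> GH_edges B X PP H"
  shows "\<exists>c. c \<in> cells E \<and> cdim E c = 1 \<and> face E c 1 = x \<and> ellE c = l \<and> \<iota> (face E c 0) = R"
proof -
  have "(\<iota> x, (l, True), R) \<in> S" using S_low g l by fastforce
  then obtain c b where cb: "(c, b) \<in> GE_idx E" "GE_edge E ellE \<iota> (c, b) = (\<iota> x, (l, True), R)"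
    using edge_bij unfolding bij_betw_def by force
  have ldim: "cdim B l = 1" using dimX l by auto
  have c: "c \<in> cells E" using cb(1) by (auto simp: GE_idx_def)
  have cd: "cdim B (ellE c) = cdim E c" using imm_cell[OF Ei c] by simp
  show ?thesis
  proof (cases "cdim E c = 1")
    case True
    hence b: "b" and e: "\<iota> (face E c 1) = \<iota> x" "ellE c = l" "\<iota> (face E c 0) = R"
      using cb(2) by (auto simp: GE_edge_def split: if_splits)
    have "face E c 1 = x" using iota_inj[OF face_vert[OF c True] x] e by simp
    thus ?thesis using e True c by blast
  next
    case False
    hence c2: "2 \<le> cdim E c" using cb(1) by (auto simp: GE_idx_def)
    have "ellE c = l" using cb(2) False by (auto simp: GE_edge_def)
    thus ?thesis using cd ldim c2 by simp
  qed
qed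

lemma edge_out: assumes c: "c \<in> cells E" "cdim E c = 1"
  shows "\<exists>n'\<in>MM. n' \<cdot> iv n' \<in> H \<and> \<iota> (face E c 1) = Om n' \<and> \<iota> (face E c 0) = Om (n' \<cdot> cls [(ellE c, True)])"
proof -
  have "(c, True) \<in> GE_idx E" using c by (simp add: GE_idx_def)
  hence "GE_edge E ellE \<iota> (c, True) \<in> S" using edge_bij unfolding bij_betw_def by blast
  hence "(\<iota> (face E c 1), (ellE c, True), \<iota> (face E c 0)) \<in> GH_edges B X PP H"
    using S_sub c by (auto simp: GE_edge_def)
  thus ?thesis unfolding GH_edges_def by blast
qed

end

context setting begin

abbreviation "rr \<equiv> cls [(\<rho>, True)]"
abbreviation "Lt a \<equiv> cls [(a, True)]"

lemma rM: "rr \<in> MM" using letterM rhoB by simp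
lemma r_idem: "im.idem rr" using letter_idem rhoB by simp
lemma r_bl: "rr = rr \<cdot> cls (bl B \<rho>)"
proof -
  have "rr = cls ((\<rho>, True) # bl B \<rho>)" using cls_eqI[OF mc_bl] rhoB by simp
  also have "\<dots> = rr \<cdot> cls (bl B \<rho>)" using cls_mul[of "[(\<rho>, True)]" "bl B \<rho>"] by simp
  finally show ?thesis .
qed

lemma m_exists: "\<exists>m\<in>MM. m \<cdot> iv m \<in> H \<and> \<iota> u = Om m \<and> Om (m \<cdot> rr) = Om m"
  using loop(1) unfolding GH_edges_def by auto

lemma Om_det: "m1 \<in> MM \<Longrightarrow> m2 \<in> MM \<Longrightarrow> a \<in> MM \<Longrightarrow> Om m1 = Om m2 \<Longrightarrow> Om (m1 \<cdot> a) = Om (m2 \<cdot> a)"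
  unfolding Om_eq by (rule im.det[OF Hc])

lemma Om_coset_elt: "n' \<in> MM \<Longrightarrow> x \<in> verts E \<Longrightarrow> \<iota> x = Om n' \<Longrightarrow> n' \<cdot> iv n' \<in> H"
proof -
  assume h: "n' \<in> MM" "x \<in> verts E" "\<iota> x = Om n'"
  obtain q where q: "q \<in> MM" "q \<cdot> iv q \<in> H" "\<iota> x = Om q" using vcoset[OF h(2)] by blast
  have "im.om (im.rm H n') = im.om (im.rm H q)" using h q unfolding Om_eq by simp
  thus ?thesis using im.coset_elt[OF Hc h(1) q(1,2)] by simp
qed

lemma loop_at: assumes x: "x \<in> verts E" and n': "n' \<in> MM" "n' \<cdot> iv n' \<in> H" "\<iota> x = Om n'"
  and l: "l \<in> P j" "2 \<le> j" "j < k" and o: "Om (n' \<cdot> Lt l) = \<iota> x"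
  shows "\<exists>c. c \<in> cells E \<and> 2 \<le> cdim E c \<and> root E c = x \<and> ellE c = l"
proof (rule loop_in[OF x l])
  have lP: "l \<in> PP" using l k PP_iff by auto
  show "(\<iota> x, (l, True), \<iota> x) \<in> GH_edges B X PP H"
    by (rule mkedge[OF _ n'(1,2)]) (use lP n' o is_cosetI in auto)
qed

lemma edge_at: assumes x: "x \<in> verts E" and n': "n' \<in> MM" "n' \<cdot> iv n' \<in> H" "\<iota> x = Om n'"
  and l: "l \<in> X" and o: "(n' \<cdot> Lt l) \<cdot> iv (n' \<cdot> Lt l) \<in> H"
  shows "\<exists>c. c \<in> cells E \<and> cdim E c = 1 \<and> face E c 1 = x \<and> ellE c = l \<and> \<iota> (face E c 0) = Om (n' \<cdot> Lt l)"
proof (rule edge_in[OF x l])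
  have "n' \<cdot> Lt l \<in> MM" using n' l letterM by simp
  thus "(\<iota> x, (l, True), Om (n' \<cdot> Lt l)) \<in> GH_edges B X PP H"
    by (intro mkedge[OF _ n'(1,2)]) (use l n' o is_cosetI in auto)
qed

lemma idem_list: "(\<forall>a\<in>set ws. \<exists>l\<in>PP. a = (l, True)) \<Longrightarrow> im.idem (cls ws)"
proof (induct ws)
  case Nil thus ?case using im.idem_one by simp
next
  case (Cons a ws)
  then obtain l where l: "l \<in> PP" "a = (l, True)" by auto
  have "cls (a # ws) = Lt l \<cdot> cls ws" using cls_mul[of "[a]" ws] l by simp
  thus ?case using im.idem_mul[OF letter_idem[OF l(1)] Cons(1)] Cons(2) by simp
qed

lemma absorb: "(\<forall>a\<in>set ws. \<exists>l\<in>PP. a = (l, True)) \<Longrightarrow> a \<in> set ws \<Longrightarrow> cls ws \<cdot> cls [a] = cls ws"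
proof (induct ws)
  case Nil thus ?case by simp
next
  case (Cons b ws)
  obtain l where l: "l \<in> PP" "b = (l, True)" using Cons by auto
  obtain l' where l': "l' \<in> PP" "a = (l', True)" using Cons by auto
  have iw: "im.idem (cls ws)" using idem_list Cons by simp
  have wM: "cls ws \<in> MM" using iw im.idem_M by blast
  have lM: "Lt l \<in> MM" "Lt l' \<in> MM" using l l' letterM by auto
  have eq: "cls (b # ws) = Lt l \<cdot> cls ws" using cls_mul[of "[b]" ws] l by simp
  show ?case
  proof (cases "a \<in> set ws")
    case True
    have "cls (b # ws) \<cdot> cls [a] = Lt l \<cdot> (cls ws \<cdot> cls [a])" using eq lM wM l' by simp
    also have "cls ws \<cdot> cls [a] = cls ws" using Cons True by simp
    finally show ?thesis using eq by simp
  next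
    case False
    hence a: "a = b" using Cons by simp
    have "cls (b # ws) \<cdot> cls [a] = Lt l \<cdot> (cls ws \<cdot> Lt l)" using eq lM wM a l by simp
    also have "cls ws \<cdot> Lt l = Lt l \<cdot> cls ws" using im.idem_comm[OF iw letter_idem[OF l(1)]] .
    also have "Lt l \<cdot> (Lt l \<cdot> cls ws) = (Lt l \<cdot> Lt l) \<cdot> cls ws" using lM wM by simp
    also have "Lt l \<cdot> Lt l = Lt l" using letter_idem[OF l(1)] im.idem_def by simp
    finally show ?thesis using eq by simp
  qed
qed

end

context setting begin

lemma faceP: assumes "3 \<le> k" "i \<le> k" shows "face B \<rho> i \<in> P (k - 1)" "face B \<rho> i \<in> PP"
proof -
  have "face B \<rho> i \<in> P (k - 1) \<and> k - 1 \<le> n" using classB2 faceB[OF assms(2)] assms by auto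
  thus "face B \<rho> i \<in> P (k - 1)" "face B \<rho> i \<in> PP" using assms PP_iff by auto
qed

lemma faceX: assumes "k = 2" "i \<le> k" shows "face B \<rho> i \<in> X"
  using classB1 faceB[OF assms(2)] assms by auto

lemma e01B: "e01 B \<rho> \<in> X"
proof -
  have "cdim B \<rho> = Suc (k - 1)" using rhoB k by simp
  thus ?thesis using e01_cell[OF Bd rhoB(1)] classB1 by blast
qed

lemma ellE_dim: "c \<in> cells E \<Longrightarrow> cdim B (ellE c) = cdim E c"
  using imm_cell[OF Ei] by simp

lemma ex3: assumes k3: "3 \<le> k"
  shows "\<exists>d. (\<forall>i\<le>k. d i \<in> cells E \<and> cdim E (d i) = k - 1 \<and> ellE (d i) = face B \<rho> i)
           \<and> (\<forall>j\<in>{1..k}. root E (d j) = u) \<and> root E (d 0) = face E (e01 E (d k)) 0"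
proof -
  obtain m where m: "m \<in> MM" "m \<cdot> iv m \<in> H" "\<iota> u = Om m" "Om (m \<cdot> rr) = Om m"
    using m_exists by blast
  let ?e = "e01 B \<rho>" and ?r0 = "face B \<rho> 0"
  let ?ws = "map (\<lambda>i. (face B \<rho> i, True)) (rev [1..<k+1])"
  let ?F = "cls ?ws" and ?Ee = "Lt ?e" and ?R0 = "Lt ?r0"
  have bl: "bl B \<rho> = ?ws @ [(?e, True), (?r0, True), (?e, False)]"
    using rhoB k3 by (simp add: bl_def)
  have wsP: "\<forall>a\<in>set ?ws. \<exists>l\<in>PP. a = (l, True)" using faceP[OF k3] by auto
  have Fi: "im.idem ?F" using idem_list[OF wsP] .
  have FM: "?F \<in> MM" using Fi im.idem_M by blast
  have EeM: "?Ee \<in> MM" using e01B letterM by simp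
  have R0i: "im.idem ?R0" using letter_idem faceP[OF k3, of 0] by simp
  have R0M: "?R0 \<in> MM" using R0i im.idem_M by blast
  have rM': "rr \<in> MM" by (rule rM)
  let ?g = "?Ee \<cdot> (?R0 \<cdot> iv ?Ee)"
  have gi: "im.idem ?g" using im.idem_conj[OF EeM R0i] EeM R0M by simp
  have gM: "?g \<in> MM" using gi im.idem_M by blast
  have blc: "cls (bl B \<rho>) = ?F \<cdot> ?g"
  proof -
    have "cls (bl B \<rho>) = ?F \<cdot> (?Ee \<cdot> (?R0 \<cdot> cls [(?e, False)]))"
      unfolding bl using cls_mul by (metis append_Cons append_Nil)
    thus ?thesis using letter_inv e01B by simp
  qed
  have rFg: "rr = rr \<cdot> (?F \<cdot> ?g)" using r_bl blc by simp
  have rL: "rr \<cdot> Lt (face B \<rho> j) = rr" if j: "1 \<le> j" "j \<le> k" for j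
  proof -
    have Lji: "im.idem (Lt (face B \<rho> j))" using letter_idem faceP[OF k3 j(2)] by simp
    have LjM: "Lt (face B \<rho> j) \<in> MM" using Lji im.idem_M by blast
    have "j \<in> set (rev [1..<k+1])" using j by auto
    hence "(face B \<rho> j, True) \<in> set ?ws" unfolding set_map by (rule imageI)
    hence FL: "?F \<cdot> Lt (face B \<rho> j) = ?F" using absorb[OF wsP] by blast
    have "rr \<cdot> Lt (face B \<rho> j) = (rr \<cdot> (?F \<cdot> ?g)) \<cdot> Lt (face B \<rho> j)" by (simp only: rFg[symmetric])
    also have "\<dots> = rr \<cdot> ?F \<cdot> (?g \<cdot> Lt (face B \<rho> j))" using rM' FM gM LjM by simp
    also have "?g \<cdot> Lt (face B \<rho> j) = Lt (face B \<rho> j) \<cdot> ?g" using im.idem_comm[OF gi Lji] .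
    also have "rr \<cdot> ?F \<cdot> (Lt (face B \<rho> j) \<cdot> ?g) = rr \<cdot> (?F \<cdot> Lt (face B \<rho> j)) \<cdot> ?g" using rM' FM gM LjM by simp
    also have "\<dots> = rr \<cdot> (?F \<cdot> ?g)" using FL rM' FM gM by simp
    also have "\<dots> = rr" by (simp only: rFg[symmetric])
    finally show ?thesis .
  qed
  have rE: "rr \<cdot> ?Ee \<cdot> ?R0 = rr \<cdot> ?Ee"
  proof -
    let ?f = "iv ?Ee \<cdot> ?Ee"
    have fi: "im.idem ?f" using im.idem_xx[of "iv ?Ee"] EeM by simp
    have fM: "?f \<in> MM" using EeM by simp
    have "rr \<cdot> ?Ee = (rr \<cdot> (?F \<cdot> ?g)) \<cdot> ?Ee" by (simp only: rFg[symmetric])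
    also have "\<dots> = (rr \<cdot> ?F \<cdot> ?Ee \<cdot> ?R0) \<cdot> ?f" using rM' FM EeM R0M by simp
    finally have 1: "rr \<cdot> ?Ee = (rr \<cdot> ?F \<cdot> ?Ee \<cdot> ?R0) \<cdot> ?f" .
    have "rr \<cdot> ?Ee \<cdot> ?R0 = (rr \<cdot> ?F \<cdot> ?Ee \<cdot> ?R0) \<cdot> (?f \<cdot> ?R0)" using 1 rM' FM EeM R0M by simp
    also have "?f \<cdot> ?R0 = ?R0 \<cdot> ?f" using im.idem_comm[OF fi R0i] .
    also have "(rr \<cdot> ?F \<cdot> ?Ee \<cdot> ?R0) \<cdot> (?R0 \<cdot> ?f) = (rr \<cdot> ?F \<cdot> ?Ee) \<cdot> (?R0 \<cdot> ?R0) \<cdot> ?f"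
      using rM' FM EeM R0M by simp
    also have "?R0 \<cdot> ?R0 = ?R0" using R0i im.idem_def by simp
    also have "(rr \<cdot> ?F \<cdot> ?Ee) \<cdot> ?R0 \<cdot> ?f = rr \<cdot> ?Ee" using 1 rM' FM EeM R0M by simp
    finally show ?thesis .
  qed
  have OmL: "Om (m \<cdot> Lt (face B \<rho> j)) = \<iota> u" if j: "1 \<le> j" "j \<le> k" for j
  proof -
    have LjM: "Lt (face B \<rho> j) \<in> MM" using letterM faceP[OF k3 j(2)] by simp
    have "Om (m \<cdot> Lt (face B \<rho> j)) = Om ((m \<cdot> rr) \<cdot> Lt (face B \<rho> j))"
      using Om_det[OF _ _ LjM m(4)[symmetric]] m rM' by simp
    also have "(m \<cdot> rr) \<cdot> Lt (face B \<rho> j) = m \<cdot> rr" using rL[OF j] m rM' LjM by simp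
    finally show ?thesis using m by simp
  qed
  define dj where "dj j = (SOME c. c \<in> cells E \<and> 2 \<le> cdim E c \<and> root E c = u \<and> ellE c = face B \<rho> j)" for j
  have dj: "dj j \<in> cells E \<and> cdim E (dj j) = k - 1 \<and> root E (dj j) = u \<and> ellE (dj j) = face B \<rho> j"
    if j: "1 \<le> j" "j \<le> k" for j
  proof -
    have "\<exists>c. c \<in> cells E \<and> 2 \<le> cdim E c \<and> root E c = u \<and> ellE c = face B \<rho> j"
      by (rule loop_at[OF u m(1,2,3) faceP(1)[OF k3 j(2)]]) (use k3 OmL[OF j] in auto)
    hence "dj j \<in> cells E \<and> 2 \<le> cdim E (dj j) \<and> root E (dj j) = u \<and> ellE (dj j) = face B \<rho> j"
      unfolding dj_def by (rule someI_ex)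
    thus ?thesis using ellE_dim faceB[OF j(2)] by force
  qed
  let ?eps = "e01 E (dj k)"
  have dk: "dj k \<in> cells E" "cdim E (dj k) = Suc (k - 2)" "root E (dj k) = u" "ellE (dj k) = face B \<rho> k"
    using dj[of k] k by auto
  have eps: "?eps \<in> cells E" "cdim E ?eps = 1" "root E ?eps = u"
    using e01_cell[OF Ed dk(1,2)] dk by auto
  have eps1: "face E ?eps 1 = u" using eps root1 by metis
  have epsl: "ellE ?eps = ?e"
  proof -
    have "ellE ?eps = e01 B (face B \<rho> k)" using imm_e01[OF Ei Ed dk(1,2)] dk by simp
    also have "\<dots> = ?e" using e01_face[OF Bd rhoB(1), of "k - 2" k] rhoB k by simp
    finally show ?thesis .
  qed
  let ?w = "face E ?eps 0"
  have w: "?w \<in> verts E" using face_vert[OF eps(1,2)] by simp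
  obtain n' where n': "n' \<in> MM" "n' \<cdot> iv n' \<in> H" "\<iota> u = Om n'" "\<iota> ?w = Om (n' \<cdot> ?Ee)"
    using edge_out[OF eps(1,2)] eps1 epsl by auto
  have wOm: "\<iota> ?w = Om (m \<cdot> ?Ee)" using Om_det[OF n'(1) m(1) EeM] n' m by simp
  have mE: "m \<cdot> ?Ee \<in> MM" "(m \<cdot> ?Ee) \<cdot> iv (m \<cdot> ?Ee) \<in> H"
    using Om_coset_elt[OF _ w wOm] m EeM by auto
  have OmR0: "Om (m \<cdot> ?Ee \<cdot> ?R0) = \<iota> ?w"
  proof -
    have "Om (m \<cdot> ?Ee \<cdot> ?R0) = Om ((m \<cdot> rr) \<cdot> (?Ee \<cdot> ?R0))"
      using Om_det[OF _ _ _ m(4)[symmetric], of "?Ee \<cdot> ?R0"] m rM' EeM R0M by simp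
    also have "(m \<cdot> rr) \<cdot> (?Ee \<cdot> ?R0) = (m \<cdot> rr) \<cdot> ?Ee" using rE m rM' EeM R0M by simp
    also have "Om \<dots> = Om (m \<cdot> ?Ee)" using Om_det[OF _ _ _ m(4), of ?Ee] m rM' EeM by simp
    finally show ?thesis using wOm by simp
  qed
  define d0 where "d0 = (SOME c. c \<in> cells E \<and> 2 \<le> cdim E c \<and> root E c = ?w \<and> ellE c = ?r0)"
  have d0: "d0 \<in> cells E \<and> cdim E d0 = k - 1 \<and> root E d0 = ?w \<and> ellE d0 = ?r0"
  proof -
    have "\<exists>c. c \<in> cells E \<and> 2 \<le> cdim E c \<and> root E c = ?w \<and> ellE c = ?r0"
      by (rule loop_at[OF w mE(1,2) wOm faceP(1)[OF k3, of 0]]) (use k3 OmR0 in auto)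
    hence "d0 \<in> cells E \<and> 2 \<le> cdim E d0 \<and> root E d0 = ?w \<and> ellE d0 = ?r0"
      unfolding d0_def by (rule someI_ex)
    thus ?thesis using ellE_dim faceB[of 0] by force
  qed
  define d where "d i = (if i = 0 then d0 else dj i)" for i
  show ?thesis
  proof (rule exI[of _ d], intro conjI)
    show "\<forall>i\<le>k. d i \<in> cells E \<and> cdim E (d i) = k - 1 \<and> ellE (d i) = face B \<rho> i"
    proof (intro allI impI)
      fix i assume "i \<le> k"
      thus "d i \<in> cells E \<and> cdim E (d i) = k - 1 \<and> ellE (d i) = face B \<rho> i"
        using d0 dj[of i] by (cases "i = 0") (auto simp: d_def)
    qed
    show "\<forall>j\<in>{1..k}. root E (d j) = u" using dj by (auto simp: d_def)
    show "root E (d 0) = face E (e01 E (d k)) 0" using d0 k by (simp add: d_def)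
  qed
qed

end

context setting begin

lemma ex2: assumes k2: "k = 2"
  shows "\<exists>d. (\<forall>i\<le>k. d i \<in> cells E \<and> cdim E (d i) = k - 1 \<and> ellE (d i) = face B \<rho> i)
           \<and> (\<forall>j\<in>{1..k}. root E (d j) = u) \<and> root E (d 0) = face E (e01 E (d k)) 0
           \<and> face E (d 1) 0 = face E (d 0) 0"
proof -
  obtain m where m: "m \<in> MM" "m \<cdot> iv m \<in> H" "\<iota> u = Om m" "Om (m \<cdot> rr) = Om m"
    using m_exists by blast
  let ?x = "face B \<rho> 2" and ?y = "face B \<rho> 0" and ?z = "face B \<rho> 1"
  have X: "?x \<in> X" "?y \<in> X" "?z \<in> X" using faceX[OF k2] k2 by auto
  let ?Lx = "Lt ?x" and ?Ly = "Lt ?y" and ?Lz = "Lt ?z"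
  have LM: "?Lx \<in> MM" "?Ly \<in> MM" "?Lz \<in> MM" using X letterM by auto
  have rM': "rr \<in> MM" by (rule rM)
  have bl: "bl B \<rho> = [(?x, True), (?y, True), (?z, False)]" using rhoB k2 by (simp add: bl_def)
  have blc: "cls (bl B \<rho>) = ?Lx \<cdot> (?Ly \<cdot> iv ?Lz)"
  proof -
    have "cls (bl B \<rho>) = ?Lx \<cdot> (?Ly \<cdot> cls [(?z, False)])"
      unfolding bl using cls_mul by (metis append_Cons append_Nil)
    thus ?thesis using letter_inv X by simp
  qed
  have rb: "rr = rr \<cdot> (?Lx \<cdot> (?Ly \<cdot> iv ?Lz))" using r_bl blc by simp
  have mrM: "m \<cdot> rr \<in> MM" using m rM' by simp
  have mr: "(m \<cdot> rr) \<cdot> iv (m \<cdot> rr) \<in> H" using Om_coset_elt[OF mrM u] m by simp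
  have rb1: "rr = rr \<cdot> ?Lx \<cdot> (?Ly \<cdot> iv ?Lz)" using rb rM' LM by simp
  have px: "(m \<cdot> ?Lx) \<cdot> iv (m \<cdot> ?Lx) \<in> H"
    by (rule im.prefix_coset[OF Hc m(1) r_idem LM(1) _ rb1 mr]) (use LM in simp)
  have rb2: "rr = rr \<cdot> (?Lx \<cdot> ?Ly) \<cdot> iv ?Lz" using rb rM' LM by simp
  have pxy: "(m \<cdot> (?Lx \<cdot> ?Ly)) \<cdot> iv (m \<cdot> (?Lx \<cdot> ?Ly)) \<in> H"
    by (rule im.prefix_coset[OF Hc m(1) r_idem _ _ rb2 mr]) (use LM in simp_all)
  have rbi: "rr = rr \<cdot> iv (?Lx \<cdot> (?Ly \<cdot> iv ?Lz))"
    by (rule im.idem_absorb_inv[OF r_idem _ rb]) (use LM in simp)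
  have rb3: "rr = rr \<cdot> ?Lz \<cdot> (iv ?Ly \<cdot> iv ?Lx)" using rbi rM' LM by simp
  have pz: "(m \<cdot> ?Lz) \<cdot> iv (m \<cdot> ?Lz) \<in> H"
    by (rule im.prefix_coset[OF Hc m(1) r_idem LM(3) _ rb3 mr]) (use LM in simp)
  obtain c2 where c2: "c2 \<in> cells E" "cdim E c2 = 1" "face E c2 1 = u" "ellE c2 = ?x" "\<iota> (face E c2 0) = Om (m \<cdot> ?Lx)"
    using edge_at[OF u m(1,2,3) X(1) px] by blast
  obtain c1 where c1: "c1 \<in> cells E" "cdim E c1 = 1" "face E c1 1 = u" "ellE c1 = ?z" "\<iota> (face E c1 0) = Om (m \<cdot> ?Lz)"
    using edge_at[OF u m(1,2,3) X(3) pz] by blast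
  let ?w = "face E c2 0"
  have w: "?w \<in> verts E" using face_vert[OF c2(1,2)] by simp
  have mxM: "m \<cdot> ?Lx \<in> MM" using m LM by simp
  have pxy': "(m \<cdot> ?Lx \<cdot> ?Ly) \<cdot> iv (m \<cdot> ?Lx \<cdot> ?Ly) \<in> H" using pxy m LM by simp
  obtain c0 where c0: "c0 \<in> cells E" "cdim E c0 = 1" "face E c0 1 = ?w" "ellE c0 = ?y" "\<iota> (face E c0 0) = Om (m \<cdot> ?Lx \<cdot> ?Ly)"
    using edge_at[OF w mxM px c2(5) X(2) pxy'] by blast
  \<comment> \<open>closing the triangle\<close>
  have eq: "rr \<cdot> ?Lz = rr \<cdot> (?Lx \<cdot> ?Ly)"
  proof (rule im.le_antisym)
    have "rr \<cdot> ?Lz = (rr \<cdot> (?Lx \<cdot> (?Ly \<cdot> iv ?Lz))) \<cdot> ?Lz" by (simp only: rb[symmetric])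
    also have "\<dots> = (rr \<cdot> (?Lx \<cdot> ?Ly)) \<cdot> (iv ?Lz \<cdot> ?Lz)" using rM' LM by simp
    finally have 1: "rr \<cdot> ?Lz = (rr \<cdot> (?Lx \<cdot> ?Ly)) \<cdot> (iv ?Lz \<cdot> ?Lz)" .
    have "im.idem (iv ?Lz \<cdot> ?Lz)" using im.idem_xx[of "iv ?Lz"] LM by simp
    from im.le_idemR[OF _ this, of "rr \<cdot> (?Lx \<cdot> ?Ly)"]
    show "im.le (rr \<cdot> ?Lz) (rr \<cdot> (?Lx \<cdot> ?Ly))" unfolding 1 using rM' LM by simp
    have "rr \<cdot> (?Lx \<cdot> ?Ly) = (rr \<cdot> ?Lz \<cdot> (iv ?Ly \<cdot> iv ?Lx)) \<cdot> (?Lx \<cdot> ?Ly)" by (simp only: rb3[symmetric])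
    also have "\<dots> = (rr \<cdot> ?Lz) \<cdot> (iv ?Ly \<cdot> (iv ?Lx \<cdot> ?Lx) \<cdot> iv (iv ?Ly))" using rM' LM by simp
    finally have 2: "rr \<cdot> (?Lx \<cdot> ?Ly) = (rr \<cdot> ?Lz) \<cdot> (iv ?Ly \<cdot> (iv ?Lx \<cdot> ?Lx) \<cdot> iv (iv ?Ly))" .
    have "im.idem (iv ?Ly \<cdot> (iv ?Lx \<cdot> ?Lx) \<cdot> iv (iv ?Ly))"
      using im.idem_conj[OF _ im.idem_xx[of "iv ?Lx"], of "iv ?Ly"] LM by simp
    from im.le_idemR[OF _ this, of "rr \<cdot> ?Lz"]
    show "im.le (rr \<cdot> (?Lx \<cdot> ?Ly)) (rr \<cdot> ?Lz)" unfolding 2 using rM' LM by simp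
    show "rr \<cdot> (?Lx \<cdot> ?Ly) \<in> MM" using rM' LM by simp
  qed
  have "Om (m \<cdot> ?Lz) = Om ((m \<cdot> rr) \<cdot> ?Lz)" using Om_det[OF _ _ _ m(4)[symmetric]] m rM' LM by simp
  also have "(m \<cdot> rr) \<cdot> ?Lz = (m \<cdot> rr) \<cdot> (?Lx \<cdot> ?Ly)" using eq m rM' LM by simp
  also have "Om \<dots> = Om (m \<cdot> (?Lx \<cdot> ?Ly))" using Om_det[OF _ _ _ m(4)] m rM' LM by simp
  finally have "\<iota> (face E c1 0) = \<iota> (face E c0 0)" using c0 c1 m LM by simp
  hence f10: "face E c1 0 = face E c0 0" using iota_inj face_vert c0 c1 by simp
  define d where "d i = (if i = 0 then c0 else if i = 1 then c1 else c2)" for i :: nat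
  show ?thesis
  proof (rule exI[of _ d], intro conjI)
    show "\<forall>i\<le>k. d i \<in> cells E \<and> cdim E (d i) = k - 1 \<and> ellE (d i) = face B \<rho> i"
    proof (intro allI impI)
      fix i assume "i \<le> k"
      hence "i = 0 \<or> i = 1 \<or> i = 2" using k2 by auto
      thus "d i \<in> cells E \<and> cdim E (d i) = k - 1 \<and> ellE (d i) = face B \<rho> i"
        using c0 c1 c2 k2 by (auto simp: d_def)
    qed
    show "\<forall>j\<in>{1..k}. root E (d j) = u"
    proof
      fix j assume "j \<in> {1..k}"
      hence "j = 1 \<or> j = 2" using k2 by auto
      moreover have "root E c1 = u" "root E c2 = u" using c1 c2 root1 by metis+
      ultimately show "root E (d j) = u" by (auto simp: d_def)
    qed
    have "e01 E c2 = c2" using c2 by (simp add: e01_def)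
    moreover have "root E c0 = face E c0 1" using c0 root1 by metis
    ultimately show "root E (d 0) = face E (e01 E (d k)) 0" using c0 k2 by (simp add: d_def)
    show "face E (d 1) 0 = face E (d 0) 0" using f10 by (simp add: d_def)
  qed
qed

end

context setting begin

lemma cellC_eq: "c \<in> cells C \<Longrightarrow> c' \<in> cells C \<Longrightarrow> cdim C c = cdim C c' \<Longrightarrow> ellC c = ellC c' \<Longrightarrow>
   root C c = root C c' \<Longrightarrow> c = c'"
  using imm_inj[OF Ci, of c c' 0] by (simp add: vert0)

lemma cellE_eq: "c \<in> cells E \<Longrightarrow> c' \<in> cells E \<Longrightarrow> cdim E c = cdim E c' \<Longrightarrow> fS c = fS c' \<Longrightarrow>
   root E c = root E c' \<Longrightarrow> c = c'"
  using imm_inj[OF fS(1), of c c' 0] by (simp add: vert0)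

lemma cellE_eq0: assumes "c \<in> cells E" "c' \<in> cells E" "cdim E c = Suc p" "cdim E c' = Suc p" "fS c = fS c'"
   "face E c 0 = face E c' 0" shows "c = c'"
proof -
  have "cdim E (face E c 0) = p" "cdim E (face E c' 0) = p" using dcxF1[OF Ed] assms by auto
  hence "vert E c (Suc p) = vert E c' (Suc p)" using vertL assms by metis
  thus ?thesis using imm_inj[OF fS(1) assms(1,2), of "Suc p"] assms by simp
qed

lemma CkF: "i \<le> k \<Longrightarrow> face C Ck i \<in> cells C \<and> cdim C (face C Ck i) = k - 1 \<and> ellC (face C Ck i) = face B \<rho> i"
  using dcxF1[OF Cd Ck(1)] imm_face[OF Ci Ck(1)] Ck k by simp

lemma lift_from:
  assumes d1: "\<forall>i\<le>k. d i \<in> cells E \<and> cdim E (d i) = k - 1 \<and> ellE (d i) = face B \<rho> i"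
    and d2: "\<forall>j\<in>{1..k}. root E (d j) = u"
    and d3: "root E (d 0) = face E (e01 E (d k)) 0"
    and d4: "k = 2 \<longrightarrow> face E (d 1) 0 = face E (d 0) 0"
  shows "lift_ok E C fS Ck k u d"
proof -
  have dk: "cdim C Ck = Suc (k - 1)" "cdim C Ck = Suc (Suc (k - 2))" using Ck k by auto
  have dc: "i \<le> k \<Longrightarrow> d i \<in> cells E" "i \<le> k \<Longrightarrow> cdim E (d i) = Suc (k - 2)" for i using d1 k by auto
  have fSj: "fS (d j) = face C Ck j" if j: "1 \<le> j" "j \<le> k" for j
  proof (rule cellC_eq)
    show "fS (d j) \<in> cells C" "face C Ck j \<in> cells C" using imm_cell[OF fS(1)] dc j CkF by auto
    show "cdim C (fS (d j)) = cdim C (face C Ck j)" using imm_cell[OF fS(1)] d1 j CkF by auto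
    show "ellC (fS (d j)) = ellC (face C Ck j)" using fS(2) d1 j CkF by auto
    have "root C (fS (d j)) = fS (root E (d j))" using imm_root[OF fS(1) Ed] dc j by simp
    also have "\<dots> = root C Ck" using d2 j Ck by simp
    also have "\<dots> = root C (face C Ck j)" using root_face[OF Cd Ck(1) dk(1)] j by simp
    finally show "root C (fS (d j)) = root C (face C Ck j)" .
  qed
  have e01dk: "e01 E (d k) \<in> cells E" "cdim E (e01 E (d k)) = 1" using e01_cell[OF Ed dc(1,2)] by auto
  have fS0: "fS (d 0) = face C Ck 0"
  proof (rule cellC_eq)
    show "fS (d 0) \<in> cells C" "face C Ck 0 \<in> cells C" using imm_cell[OF fS(1)] dc CkF by auto
    show "cdim C (fS (d 0)) = cdim C (face C Ck 0)" using imm_cell[OF fS(1)] d1 CkF by auto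
    show "ellC (fS (d 0)) = ellC (face C Ck 0)" using fS(2) d1 CkF by auto
    have "root C (fS (d 0)) = fS (root E (d 0))" using imm_root[OF fS(1) Ed dc(1)[of 0]] by simp
    also have "\<dots> = fS (face E (e01 E (d k)) 0)" using d3 by simp
    also have "\<dots> = face C (fS (e01 E (d k))) 0" using imm_face[OF fS(1) e01dk(1)] e01dk by simp
    also have "\<dots> = face C (e01 C (face C Ck k)) 0" using imm_e01[OF fS(1) Ed dc(1,2)] fSj[of k] k by simp
    also have "\<dots> = face C (e01 C Ck) 0" using e01_face[OF Cd Ck(1) dk(2), of k] k by simp
    also have "\<dots> = root C (face C Ck 0)" using root_face0[OF Cd Ck(1) dk(1)] by simp
    finally show "root C (fS (d 0)) = root C (face C Ck 0)" .
  qed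
  have fSd: "fS (d i) = face C Ck i" if "i \<le> k" for i
    using fSj fS0 that by (cases "i = 0") auto
  have Fc: "face E (d j) i \<in> cells E \<and> cdim E (face E (d j) i) = k - 2" if "i \<le> k - 1" "j \<le> k" for i j
    using dcxF1[OF Ed dc(1)[OF that(2)], of i] dc(2)[OF that(2)] that by simp
  have FfS: "fS (face E (d j) i) = fS (face E (d i) (j - 1))" if ij: "i < j" "j \<le> k" for i j
  proof -
    have "fS (face E (d j) i) = face C (face C Ck j) i"
      using imm_face[OF fS(1) dc(1)] dc(2) fSd ij by simp
    also have "\<dots> = face C (face C Ck i) (j - 1)" using dcxF2[OF Cd Ck(1), of i j] ij Ck k by simp
    also have "\<dots> = fS (face E (d i) (j - 1))"
      using imm_face[OF fS(1) dc(1), of i "j - 1"] dc(2) fSd ij by simp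
    finally show ?thesis .
  qed
  have caseA: "face E (d j) i = face E (d i) (j - 1)" if ij: "1 \<le> i" "i < j" "j \<le> k" for i j
  proof (rule cellE_eq)
    show "face E (d j) i \<in> cells E" "face E (d i) (j - 1) \<in> cells E"
      "cdim E (face E (d j) i) = cdim E (face E (d i) (j - 1))" using Fc ij by auto
    show "fS (face E (d j) i) = fS (face E (d i) (j - 1))" using FfS ij by simp
    have "root E (face E (d j) i) = u" using root_face[OF Ed dc(1,2)] d2 ij by simp
    moreover have "root E (face E (d i) (j - 1)) = u" using root_face[OF Ed dc(1,2), of i "j - 1"] d2 ij by simp
    ultimately show "root E (face E (d j) i) = root E (face E (d i) (j - 1))" by simp
  qed
  have caseB: "face E (d j) 0 = face E (d 0) (j - 1)" if j: "2 \<le> j" "j \<le> k" for j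
  proof (rule cellE_eq)
    show "face E (d j) 0 \<in> cells E" "face E (d 0) (j - 1) \<in> cells E"
      "cdim E (face E (d j) 0) = cdim E (face E (d 0) (j - 1))" using Fc j by auto
    show "fS (face E (d j) 0) = fS (face E (d 0) (j - 1))" using FfS j by simp
    have ee: "e01 E (d j) = e01 E (d k)"
    proof (rule cellE_eq)
      show "e01 E (d j) \<in> cells E" "e01 E (d k) \<in> cells E" "cdim E (e01 E (d j)) = cdim E (e01 E (d k))"
        using e01_cell[OF Ed dc(1,2)] j by auto
      have "fS (e01 E (d j)) = e01 C Ck" using imm_e01[OF fS(1) Ed dc(1,2)] fSd e01_face[OF Cd Ck(1) dk(2)] j by simp
      moreover have "fS (e01 E (d k)) = e01 C Ck" using imm_e01[OF fS(1) Ed dc(1,2)] fSd e01_face[OF Cd Ck(1) dk(2)] k by simp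
      ultimately show "fS (e01 E (d j)) = fS (e01 E (d k))" by simp
      show "root E (e01 E (d j)) = root E (e01 E (d k))" using e01_cell[OF Ed dc(1,2)] d2 j k by simp
    qed
    have "root E (face E (d j) 0) = face E (e01 E (d j)) 0" using root_face0[OF Ed dc(1,2)] j by simp
    also have "\<dots> = root E (d 0)" using ee d3 by simp
    also have "\<dots> = root E (face E (d 0) (j - 1))" using root_face[OF Ed dc(1,2), of 0 "j - 1"] j by simp
    finally show "root E (face E (d j) 0) = root E (face E (d 0) (j - 1))" .
  qed
  have caseC: "face E (d 1) 0 = face E (d 0) 0"
  proof (cases "k = 2")
    case True thus ?thesis using d4 by simp
  next
    case False
    hence k3: "3 \<le> k" using k by simp
    have d2c: "i \<le> k \<Longrightarrow> 2 \<le> cdim E (d i)" for i using dc k3 by fastforce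
    have "face E (face E (d 1) 0) 0 = face E (face E (d 1) 1) 0"
      using dcxF2[OF Ed dc(1), of 1 0 1] d2c[of 1] dc(2)[of 1] k3 by simp
    also have "face E (d 1) 1 = face E (d 2) 1" using caseA[of 1 2] k3 by simp
    also have "face E (face E (d 2) 1) 0 = face E (face E (d 2) 0) 0"
      using dcxF2[OF Ed dc(1), of 2 0 1] d2c[of 2] dc(2)[of 2] k3 by simp
    also have "face E (d 2) 0 = face E (d 0) 1" using caseB[of 2] k3 by simp
    also have "face E (face E (d 0) 1) 0 = face E (face E (d 0) 0) 0"
      using dcxF2[OF Ed dc(1), of 0 0 1] d2c[of 0] dc(2)[of 0] k3 by simp
    finally have ff: "face E (face E (d 1) 0) 0 = face E (face E (d 0) 0) 0" .
    show ?thesis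
    proof (rule cellE_eq0[of _ _ "k - 3"])
      show "face E (d 1) 0 \<in> cells E" "face E (d 0) 0 \<in> cells E" using Fc k3 by auto
      show "cdim E (face E (d 1) 0) = Suc (k - 3)" "cdim E (face E (d 0) 0) = Suc (k - 3)" using Fc k3 by auto
      show "fS (face E (d 1) 0) = fS (face E (d 0) 0)" using FfS[of 0 1] k3 by simp
      show "face E (face E (d 1) 0) 0 = face E (face E (d 0) 0) 0" by (rule ff)
    qed
  qed
  have compat: "\<forall>i j. i < j \<and> j \<le> k \<longrightarrow> face E (d j) i = face E (d i) (j - 1)"
  proof (intro allI impI)
    fix i j assume ij: "i < j \<and> j \<le> k"
    show "face E (d j) i = face E (d i) (j - 1)"
    proof (cases "1 \<le> i")
      case True thus ?thesis using caseA ij by simp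
    next
      case False
      hence i0: "i = 0" by simp
      show ?thesis
      proof (cases "j = 1")
        case True thus ?thesis using caseC i0 by simp
      next
        case False thus ?thesis using caseB[of j] ij i0 by simp
      qed
    qed
  qed
  show ?thesis unfolding lift_ok_def using d1 fSd compat d2 by auto
qed

lemma lift_unique: assumes "lift_ok E C fS Ck k u d" "lift_ok E C fS Ck k u d'"
  shows "\<forall>i\<le>k. d' i = d i"
proof -
  have L: "\<forall>i\<le>k. d i \<in> cells E \<and> cdim E (d i) = k - 1 \<and> fS (d i) = face C Ck i"
    "\<forall>i j. i < j \<and> j \<le> k \<longrightarrow> face E (d j) i = face E (d i) (j - 1)" "\<forall>j\<in>{1..k}. root E (d j) = u"
    using assms(1) unfolding lift_ok_def by blast+
  have L': "\<forall>i\<le>k. d' i \<in> cells E \<and> cdim E (d' i) = k - 1 \<and> fS (d' i) = face C Ck i"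
    "\<forall>i j. i < j \<and> j \<le> k \<longrightarrow> face E (d' j) i = face E (d' i) (j - 1)" "\<forall>j\<in>{1..k}. root E (d' j) = u"
    using assms(2) unfolding lift_ok_def by blast+
  have pos: "d' j = d j" if j: "1 \<le> j" "j \<le> k" for j
    using cellE_eq[of "d' j" "d j"] L L' j by auto
  have "face E (d' 0) 0 = face E (d' 1) 0" using L'(2) k by force
  also have "\<dots> = face E (d 1) 0" using pos[of 1] k by simp
  also have "\<dots> = face E (d 0) 0" using L(2) k by force
  finally have "d' 0 = d 0" using cellE_eq0[of "d' 0" "d 0" "k - 2"] L L' k by auto
  thus ?thesis using pos by (metis One_nat_def Suc_leI not_gr0)
qed

lemma main: "\<exists>d. lift_ok E C fS Ck k u d
           \<and> (\<forall>d'. lift_ok E C fS Ck k u d' \<longrightarrow> (\<forall>i\<le>k. d' i = d i))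
           \<and> is_dcx (attach E k d)
           \<and> root (attach E k d) None = Some u"
proof -
  obtain d where d1: "\<forall>i\<le>k. d i \<in> cells E \<and> cdim E (d i) = k - 1 \<and> ellE (d i) = face B \<rho> i"
    and d2: "\<forall>j\<in>{1..k}. root E (d j) = u" and d3: "root E (d 0) = face E (e01 E (d k)) 0"
    and d4: "k = 2 \<longrightarrow> face E (d 1) 0 = face E (d 0) 0"
  proof (cases "k = 2")
    case True thus ?thesis using ex2 that by blast
  next
    case False thus ?thesis using ex3 that k by (metis Suc_leI le_neq_implies_less numeral_2_eq_2 numeral_3_eq_3)
  qed
  have lo: "lift_ok E C fS Ck k u d" using lift_from[OF d1 d2 d3 d4] .
  have dd: "\<forall>i\<le>k. d i \<in> cells E \<and> cdim E (d i) = k - 1"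
    "\<forall>i j. i < j \<and> j \<le> k \<longrightarrow> face E (d j) i = face E (d i) (j - 1)"
    using lo unfolding lift_ok_def by blast+
  show ?thesis
  proof (intro exI[of _ d] conjI allI impI)
    show "lift_ok E C fS Ck k u d" by (rule lo)
    show "\<And>d' i. lift_ok E C fS Ck k u d' \<Longrightarrow> i \<le> k \<Longrightarrow> d' i = d i" using lift_unique[OF lo] by blast
    show "is_dcx (attach E k d)" using attach_dcx[OF Ed k(1) dd] .
    show "root (attach E k d) None = Some u" using attach_root[of k E d u] d1 d2 k by auto
  qed
qed

end

theorem mainTheorem11:
  fixes B :: "'l dcx" and X :: "'l set" and P :: "nat \<Rightarrow> 'l set" and n :: nat and b0 :: 'l
    and C :: "'c dcx" and ellC :: "'c \<Rightarrow> 'l"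
    and E :: "'e dcx" and ellE :: "'e \<Rightarrow> 'l" and fS :: "'e \<Rightarrow> 'c"
    and H :: "'l mel set" and \<iota> :: "'e \<Rightarrow> 'l mel set"
    and S :: "('l mel set \<times> ('l \<times> bool) \<times> 'l mel set) set"
    and k :: nat and u :: 'e and \<rho> :: 'l and Ck :: 'c
  assumes B: "is_B B X P n b0"
    and C: "is_labeled C B ellC"
    and H: "closed_inv_submonoid B X (Pall P n) H"
    and k: "2 \<le> k" "k \<le> n"
    and E: "is_labeled E B ellE"
    and fS: "is_imm E C fS" "\<forall>c\<in>cells E. ellC (fS c) = ellE c"
    and vert_bij: "bij_betw \<iota> (verts E) {R. is_coset B X (Pall P n) H R}"
    and S_sub: "S \<subseteq> GH_edges B X (Pall P n) H"
    and edge_bij: "bij_betw (GE_edge E ellE \<iota>) (GE_idx E) S"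
    and S_low: "\<forall>(R1, a, R2) \<in> GH_edges B X (Pall P n) H.
                  fst a \<in> X \<union> (\<Union>j\<in>{2..<k}. P j) \<longrightarrow> (R1, a, R2) \<in> S"
    and u: "u \<in> verts E"
    and loop: "(\<iota> u, (\<rho>, True), \<iota> u) \<in> GH_edges B X (Pall P n) H"
              "(\<iota> u, (\<rho>, True), \<iota> u) \<notin> S"
    and rho: "\<rho> \<in> P k"
    and Ck: "Ck \<in> cells C" "cdim C Ck = k" "ellC Ck = \<rho>" "root C Ck = fS u"
  shows "\<exists>d. lift_ok E C fS Ck k u d
           \<and> (\<forall>d'. lift_ok E C fS Ck k u d' \<longrightarrow> (\<forall>i\<le>k. d' i = d i))
           \<and> is_dcx (attach E k d)
           \<and> root (attach E k d) None = Some u"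
proof -
  interpret setting B X P n b0 C ellC E ellE fS H \<iota> S k u \<rho> Ck
    by (rule setting.intro) (fact assms)+
  show ?thesis by (rule main)
qed


end
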